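(* Let $A$ be a finite dimensional triangular algebra over a field $k$ with respect to the complete set of primitive orthogonal idempotents $e_1,\dots,e_n$, and let $P_j=e_jA$. Let $1\le i\le j\le n$. Then in the homotopy category $\mathcal{K}^b(A)$ of bounded complexes of finite dimensional right $A$-modules, $$R_i^A(P_j)\cong\begin{cases}0&\text{if }j=i,\\ P_j&\text{if }j>i.\end{cases}$$
   Context: $A$ is triangular if $e_iAe_j=0$ for all $j<i$ and $e_iAe_i\cong k$ for all $i$. $R_i^A=-\otimes_A C_i$, where $C_i$ is the complex of $A$-$A$-bimodules $Ae_i\otimes_k e_iA\xrightarrow{m}A$ with $A$ in degree $0$, $Ae_i\otimes_k e_iA$ in degree $-1$, and $m$ the multiplication map. *)

theory Defs
  imports Complex_Main "HOL-Library.Function_Algebras"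
begin

text \<open>A k-algebra structure on a ring 'a is given by a scalar multiplication
  smult making 'a a k-vector space, compatible with the ring multiplication.\<close>

definition fd_algebra :: "('k::field \<Rightarrow> 'a::ring_1 \<Rightarrow> 'a) \<Rightarrow> bool" where
  "fd_algebra smult \<longleftrightarrow>
     vector_space smult \<and>
     (\<forall>c a b. smult c (a * b) = smult c a * b \<and> smult c (a * b) = a * smult c b) \<and>
     (\<exists>B. finite B \<and> module.span smult B = UNIV)"

definition idem :: "'a::ring_1 \<Rightarrow> bool" where
  "idem u \<longleftrightarrow> u * u = u"

definition primitive_idem :: "'a::ring_1 \<Rightarrow> bool" where
  "primitive_idem u \<longleftrightarrow> u \<noteq> 0 \<and> idem u \<and>
     \<not> (\<exists>v w. idem v \<and> idem w \<and> v \<noteq> 0 \<and> w \<noteq> 0 \<and> v * w = 0 \<and> w * v = 0 \<and> u = v + w)"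

definition complete_prim_orth_idems :: "(nat \<Rightarrow> 'a::ring_1) \<Rightarrow> nat \<Rightarrow> bool" where
  "complete_prim_orth_idems e n \<longleftrightarrow>
     (\<forall>i\<in>{1..n}. primitive_idem (e i)) \<and>
     (\<forall>i\<in>{1..n}. \<forall>j\<in>{1..n}. i \<noteq> j \<longrightarrow> e i * e j = 0) \<and>
     (\<Sum>i=1..n. e i) = 1"

definition corner_iso_field :: "('k::field \<Rightarrow> 'a::ring_1 \<Rightarrow> 'a) \<Rightarrow> 'a \<Rightarrow> bool" where
  "corner_iso_field smult u \<longleftrightarrow>
     (\<exists>\<phi> :: 'k \<Rightarrow> 'a. bij_betw \<phi> UNIV {u * a * u | a. True} \<and>
        (\<forall>c d. \<phi> (c + d) = \<phi> c + \<phi> d) \<and>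
        (\<forall>c d. \<phi> (c * d) = \<phi> c * \<phi> d) \<and>
        (\<forall>c d. \<phi> (c * d) = smult c (\<phi> d)) \<and>
        \<phi> 1 = u)"

definition triangular :: "('k::field \<Rightarrow> 'a::ring_1 \<Rightarrow> 'a) \<Rightarrow> (nat \<Rightarrow> 'a) \<Rightarrow> nat \<Rightarrow> bool" where
  "triangular smult e n \<longleftrightarrow>
     (\<forall>i\<in>{1..n}. \<forall>j\<in>{1..n}. j < i \<longrightarrow> (\<forall>a. e i * a * e j = 0)) \<and>
     (\<forall>i\<in>{1..n}. corner_iso_field smult (e i))"

record ('m, 'a) rmod =
  carr :: "'m set"
  zer :: 'm
  add :: "'m \<Rightarrow> 'm \<Rightarrow> 'm"
  ract :: "'m \<Rightarrow> 'a \<Rightarrow> 'm"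

record ('m, 'a) bimod = "('m, 'a) rmod" +
  lact :: "'a \<Rightarrow> 'm \<Rightarrow> 'm"

definition rhom :: "('m, 'a, 'x) rmod_scheme \<Rightarrow> ('n, 'a, 'y) rmod_scheme \<Rightarrow> ('m \<Rightarrow> 'n) \<Rightarrow> bool" where
  "rhom M N f \<longleftrightarrow>
     (\<forall>x\<in>carr M. f x \<in> carr N) \<and>
     (\<forall>x\<in>carr M. \<forall>y\<in>carr M. f (add M x y) = add N (f x) (f y)) \<and>
     (\<forall>x\<in>carr M. \<forall>a. f (ract M x a) = ract N (f x) a)"

definition delta :: "'m \<Rightarrow> 'n \<Rightarrow> ('m \<times> 'n \<Rightarrow> int)" where
  "delta x y = (\<lambda>z. if z = (x, y) then 1 else 0)"

definition tens_rels ::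
  "'m set \<Rightarrow> ('m \<Rightarrow> 'm \<Rightarrow> 'm) \<Rightarrow> ('m \<Rightarrow> 'r \<Rightarrow> 'm) \<Rightarrow>
   'n set \<Rightarrow> ('n \<Rightarrow> 'n \<Rightarrow> 'n) \<Rightarrow> ('r \<Rightarrow> 'n \<Rightarrow> 'n) \<Rightarrow> ('m \<times> 'n \<Rightarrow> int) set" where
  "tens_rels MC addM ra NC addN la =
     {delta (addM x x') y - delta x y - delta x' y | x x' y. x \<in> MC \<and> x' \<in> MC \<and> y \<in> NC} \<union>
     {delta x (addN y y') - delta x y - delta x y' | x y y'. x \<in> MC \<and> y \<in> NC \<and> y' \<in> NC} \<union>
     {delta (ra x r) y - delta x (la r y) | x y r. x \<in> MC \<and> y \<in> NC}"

inductive_set zspan :: "('b::ab_group_add) set \<Rightarrow> 'b set" for R where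
  zspan_zero: "0 \<in> zspan R"
| zspan_add: "g \<in> zspan R \<Longrightarrow> r \<in> R \<Longrightarrow> g + r \<in> zspan R"
| zspan_diff: "g \<in> zspan R \<Longrightarrow> r \<in> R \<Longrightarrow> g - r \<in> zspan R"

text \<open>The free abelian group on MC \<times> NC, as finitely supported integer functions.\<close>
definition free_ab :: "'m set \<Rightarrow> 'n set \<Rightarrow> ('m \<times> 'n \<Rightarrow> int) set" where
  "free_ab MC NC = {f. finite {z. f z \<noteq> 0} \<and> {z. f z \<noteq> 0} \<subseteq> MC \<times> NC}"

definition coset :: "('b::ab_group_add) set \<Rightarrow> 'b \<Rightarrow> 'b set" where
  "coset Z f = (\<lambda>s. f + s) ` Z"

definition setadd :: "('b::ab_group_add) set \<Rightarrow> 'b set \<Rightarrow> 'b set" where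
  "setadd X Y = {x + y | x y. x \<in> X \<and> y \<in> Y}"

definition pushf :: "('u \<Rightarrow> 'v) \<Rightarrow> ('u \<Rightarrow> int) \<Rightarrow> ('v \<Rightarrow> int)" where
  "pushf \<phi> f = (\<lambda>w. \<Sum>z\<in>{z. f z \<noteq> 0 \<and> \<phi> z = w}. f z)"

text \<open>Map on quotient classes induced by a map on generators; Z' is the target relation subgroup.\<close>
definition tmap :: "('v \<Rightarrow> int) set \<Rightarrow> ('u \<Rightarrow> 'v) \<Rightarrow> ('u \<Rightarrow> int) set \<Rightarrow> ('v \<Rightarrow> int) set" where
  "tmap Z' \<phi> X = {pushf \<phi> f + s | f s. f \<in> X \<and> s \<in> Z'}"

definition rel_A :: "('p, 'a, 'x) rmod_scheme \<Rightarrow> ('b, 'a) bimod \<Rightarrow> ('p \<times> 'b \<Rightarrow> int) set" where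
  "rel_A P B = zspan (tens_rels (carr P) (add P) (ract P) (carr B) (add B) (lact B))"

definition tens_A :: "('p, 'a, 'x) rmod_scheme \<Rightarrow> ('b, 'a) bimod \<Rightarrow> (('p \<times> 'b \<Rightarrow> int) set, 'a) rmod" where
  "tens_A P B =
     \<lparr> carr = coset (rel_A P B) ` free_ab (carr P) (carr B),
       zer = rel_A P B,
       add = setadd,
       ract = (\<lambda>X a. tmap (rel_A P B) (\<lambda>(p, b). (p, ract B b a)) X) \<rparr>"

text \<open>A complex (cohomological grading) is a family of modules X n with differentials
  d n : X n \<rightarrow> X (n+1).  Maps between complexes are families of module maps.\<close>

definition chain_map ::
  "(int \<Rightarrow> ('m, 'a, 'x) rmod_scheme) \<Rightarrow> (int \<Rightarrow> 'm \<Rightarrow> 'm) \<Rightarrow>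
   (int \<Rightarrow> ('n, 'a, 'y) rmod_scheme) \<Rightarrow> (int \<Rightarrow> 'n \<Rightarrow> 'n) \<Rightarrow> (int \<Rightarrow> 'm \<Rightarrow> 'n) \<Rightarrow> bool" where
  "chain_map X dX Y dY f \<longleftrightarrow>
     (\<forall>n. rhom (X n) (Y n) (f n)) \<and>
     (\<forall>n. \<forall>x\<in>carr (X n). f (n + 1) (dX n x) = dY n (f n x))"

definition homotopic ::
  "(int \<Rightarrow> ('m, 'a, 'x) rmod_scheme) \<Rightarrow> (int \<Rightarrow> 'm \<Rightarrow> 'm) \<Rightarrow>
   (int \<Rightarrow> ('n, 'a, 'y) rmod_scheme) \<Rightarrow> (int \<Rightarrow> 'n \<Rightarrow> 'n) \<Rightarrow>
   (int \<Rightarrow> 'm \<Rightarrow> 'n) \<Rightarrow> (int \<Rightarrow> 'm \<Rightarrow> 'n) \<Rightarrow> bool" where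
  "homotopic X dX Y dY f g \<longleftrightarrow>
     (\<exists>h. (\<forall>n. rhom (X n) (Y (n - 1)) (h n)) \<and>
          (\<forall>n. \<forall>x\<in>carr (X n).
              f n x = add (Y n) (g n x) (add (Y n) (dY (n - 1) (h n x)) (h (n + 1) (dX n x)))))"

definition htpy_equiv ::
  "(int \<Rightarrow> ('m, 'a, 'x) rmod_scheme) \<Rightarrow> (int \<Rightarrow> 'm \<Rightarrow> 'm) \<Rightarrow>
   (int \<Rightarrow> ('n, 'a, 'y) rmod_scheme) \<Rightarrow> (int \<Rightarrow> 'n \<Rightarrow> 'n) \<Rightarrow> bool" where
  "htpy_equiv X dX Y dY \<longleftrightarrow>
     (\<exists>f g. chain_map X dX Y dY f \<and> chain_map Y dY X dX g \<and>
        homotopic X dX X dX (\<lambda>n. g n \<circ> f n) (\<lambda>n x. x) \<and>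
        homotopic Y dY Y dY (\<lambda>n. f n \<circ> g n) (\<lambda>n x. x))"

definition zero_cx :: "int \<Rightarrow> (unit, 'a) rmod" where
  "zero_cx n = \<lparr> carr = {()}, zer = (), add = (\<lambda>_ _. ()), ract = (\<lambda>_ _. ()) \<rparr>"

definition zero_cx_d :: "int \<Rightarrow> unit \<Rightarrow> unit" where
  "zero_cx_d n x = ()"

definition proj_mod :: "'a::ring_1 \<Rightarrow> ('a, 'a) rmod" where
  "proj_mod u = \<lparr> carr = {u * a | a. True}, zer = 0, add = (+), ract = (\<lambda>x a. x * a) \<rparr>"

definition zero_submod :: "('a::ring_1, 'a) rmod" where
  "zero_submod = \<lparr> carr = {0}, zer = 0, add = (+), ract = (\<lambda>x a. x * a) \<rparr>"

definition stalk0 :: "('a::ring_1, 'a) rmod \<Rightarrow> int \<Rightarrow> ('a, 'a) rmod" where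
  "stalk0 M n = (if n = 0 then M else zero_submod)"

definition stalk0_d :: "int \<Rightarrow> 'a::ring_1 \<Rightarrow> 'a" where
  "stalk0_d n x = 0"

text \<open>Ae_i \<otimes>_k e_iA : generators are pairs (x, y) with x \<in> Ae_i, y \<in> e_iA.\<close>
definition rel_k :: "('k::field \<Rightarrow> 'a::ring_1 \<Rightarrow> 'a) \<Rightarrow> 'a \<Rightarrow> ('a \<times> 'a \<Rightarrow> int) set" where
  "rel_k smult u = zspan (tens_rels {a * u | a. True} (+) (\<lambda>x c. x * smult c 1)
                                   {u * a | a. True} (+) (\<lambda>c y. smult c 1 * y))"

definition tens_k_bimod :: "('k::field \<Rightarrow> 'a::ring_1 \<Rightarrow> 'a) \<Rightarrow> 'a \<Rightarrow> (('a \<times> 'a \<Rightarrow> int) set, 'a) bimod" where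
  "tens_k_bimod smult u =
     \<lparr> carr = coset (rel_k smult u) ` free_ab {a * u | a. True} {u * a | a. True},
       zer = rel_k smult u,
       add = setadd,
       ract = (\<lambda>X b. tmap (rel_k smult u) (\<lambda>(x, y). (x, y * b)) X),
       lact = (\<lambda>b X. tmap (rel_k smult u) (\<lambda>(x, y). (b * x, y)) X) \<rparr>"

text \<open>The multiplication map Ae_i \<otimes>_k e_iA \<rightarrow> A, x \<otimes> y \<mapsto> x y (on a class, via any representative).\<close>
definition msum :: "('a \<times> 'a \<Rightarrow> int) \<Rightarrow> 'a::ring_1" where
  "msum f = (\<Sum>z\<in>{z. f z \<noteq> 0}. of_int (f z) * (fst z * snd z))"

definition mult_map :: "('a \<times> 'a \<Rightarrow> int) set \<Rightarrow> 'a::ring_1" where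
  "mult_map X = (THE v. \<exists>f\<in>X. v = msum f)"

type_synonym 'a cterm = "('a \<times> 'a \<Rightarrow> int) set + 'a"

definition Ci_term :: "('k::field \<Rightarrow> 'a::ring_1 \<Rightarrow> 'a) \<Rightarrow> 'a \<Rightarrow> int \<Rightarrow> ('a cterm, 'a) bimod" where
  "Ci_term smult u n =
     (if n = -1 then
        \<lparr> carr = Inl ` carr (tens_k_bimod smult u),
          zer = Inl (zer (tens_k_bimod smult u)),
          add = (\<lambda>x y. Inl (add (tens_k_bimod smult u) (projl x) (projl y))),
          ract = (\<lambda>x b. Inl (ract (tens_k_bimod smult u) (projl x) b)),
          lact = (\<lambda>b x. Inl (lact (tens_k_bimod smult u) b (projl x))) \<rparr>
      else if n = 0 then
        \<lparr> carr = range Inr,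
          zer = Inr 0,
          add = (\<lambda>x y. Inr (projr x + projr y)),
          ract = (\<lambda>x b. Inr (projr x * b)),
          lact = (\<lambda>b x. Inr (b * projr x)) \<rparr>
      else
        \<lparr> carr = {Inr 0}, zer = Inr 0, add = (\<lambda>_ _. Inr 0),
          ract = (\<lambda>_ _. Inr 0), lact = (\<lambda>_ _. Inr 0) \<rparr>)"

definition Ci_d :: "('k::field \<Rightarrow> 'a::ring_1 \<Rightarrow> 'a) \<Rightarrow> 'a \<Rightarrow> int \<Rightarrow> 'a cterm \<Rightarrow> 'a cterm" where
  "Ci_d smult u n x = (if n = -1 then Inr (mult_map (projl x)) else zer (Ci_term smult u (n + 1)))"

text \<open>R_i^A(P) = P \<otimes>_A C_i, degreewise, with differential id_P \<otimes> d_{C_i}.\<close>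
definition RiA :: "('k::field \<Rightarrow> 'a::ring_1 \<Rightarrow> 'a) \<Rightarrow> 'a \<Rightarrow> ('p, 'a, 'x) rmod_scheme \<Rightarrow>
                   int \<Rightarrow> (('p \<times> 'a cterm \<Rightarrow> int) set, 'a) rmod" where
  "RiA smult u P n = tens_A P (Ci_term smult u n)"

definition RiA_d :: "('k::field \<Rightarrow> 'a::ring_1 \<Rightarrow> 'a) \<Rightarrow> 'a \<Rightarrow> ('p, 'a, 'x) rmod_scheme \<Rightarrow>
                   int \<Rightarrow> ('p \<times> 'a cterm \<Rightarrow> int) set \<Rightarrow> ('p \<times> 'a cterm \<Rightarrow> int) set" where
  "RiA_d smult u P n X = tmap (rel_A P (Ci_term smult u (n + 1))) (\<lambda>(p, c). (p, Ci_d smult u n c)) X"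

end

theory Submission
  imports Defs
begin

definition fs :: "('b \<Rightarrow> int) \<Rightarrow> bool" where "fs f \<longleftrightarrow> finite {z. f z \<noteq> 0}"

definition W :: "('b \<Rightarrow> 'a::ring_1) \<Rightarrow> ('b \<Rightarrow> int) \<Rightarrow> 'a" where
  "W w f = (\<Sum>z\<in>{z. f z \<noteq> 0}. of_int (f z) * w z)"

lemma msum_W: "msum f = W (\<lambda>z. fst z * snd z) f"
  by (simp add: msum_def W_def)

lemma fs_zero[simp]: "fs 0" by (simp add: fs_def)
lemma fs_add: "fs f \<Longrightarrow> fs g \<Longrightarrow> fs (f + g)"
  unfolding fs_def by (rule finite_subset[of _ "{z. f z \<noteq> 0} \<union> {z. g z \<noteq> 0}"]) auto
lemma fs_uminus: "fs f \<Longrightarrow> fs (- f)" by (simp add: fs_def)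
lemma fs_diff: "fs f \<Longrightarrow> fs g \<Longrightarrow> fs (f - g)"
  unfolding fs_def by (rule finite_subset[of _ "{z. f z \<noteq> 0} \<union> {z. g z \<noteq> 0}"]) auto
lemma delta_supp: "{z. delta x y z \<noteq> 0} = {(x,y)}" by (auto simp: delta_def)
lemma fs_delta[simp]: "fs (delta x y)" by (simp add: fs_def delta_supp)

lemma W_sup: "finite S \<Longrightarrow> {z. f z \<noteq> 0} \<subseteq> S \<Longrightarrow> W w f = (\<Sum>z\<in>S. of_int (f z) * w z)"
  unfolding W_def by (rule sum.mono_neutral_left) auto

lemma W_add: assumes "fs f" "fs g" shows "W w (f + g) = W w f + W w g"
proof -
  let ?S = "{z. f z \<noteq> 0} \<union> {z. g z \<noteq> 0}"
  have fin: "finite ?S" using assms by (simp add: fs_def)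
  have "W w (f + g) = (\<Sum>z\<in>?S. of_int ((f+g) z) * w z)" by (rule W_sup[OF fin]) auto
  also have "\<dots> = (\<Sum>z\<in>?S. of_int (f z) * w z) + (\<Sum>z\<in>?S. of_int (g z) * w z)"
    by (simp add: sum.distrib distrib_right)
  also have "(\<Sum>z\<in>?S. of_int (f z) * w z) = W w f" by (rule W_sup[OF fin, symmetric]) auto
  also have "(\<Sum>z\<in>?S. of_int (g z) * w z) = W w g" by (rule W_sup[OF fin, symmetric]) auto
  finally show ?thesis .
qed

lemma W_uminus: "W w (- f) = - W w f"
  by (simp add: W_def sum_negf)
lemma W_diff: "fs f \<Longrightarrow> fs g \<Longrightarrow> W w (f - g) = W w f - W w g"
  using W_add[of f "-g" w] by (simp add: fs_uminus W_uminus)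
lemma W_zero[simp]: "W w 0 = 0" by (simp add: W_def)
lemma W_delta[simp]: "W w (delta x y) = w (x, y)"
  by (simp add: W_def delta_supp) (simp add: delta_def)

lemma W_cong: "(\<And>z. f z \<noteq> 0 \<Longrightarrow> w z = w' z) \<Longrightarrow> W w f = W w' f"
  unfolding W_def by (rule sum.cong) auto

lemma W_mult_right: "W (\<lambda>z. w z * a) f = W w f * a"
  by (simp add: W_def sum_distrib_right mult.assoc)
lemma W_mult_left: "W (\<lambda>z. a * w z) f = a * W w f"
  unfolding W_def sum_distrib_left by (rule sum.cong) (auto, metis mult.assoc mult_of_int_commute)

lemma zspan_induct[consumes 1, case_names zero add diff]:
  assumes "g \<in> zspan R" "P 0"
    "\<And>g r. g \<in> zspan R \<Longrightarrow> P g \<Longrightarrow> r \<in> R \<Longrightarrow> P (g + r)"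
    "\<And>g r. g \<in> zspan R \<Longrightarrow> P g \<Longrightarrow> r \<in> R \<Longrightarrow> P (g - r)"
  shows "P g"
  using assms(1) by (induct rule: zspan.induct) (rule assms; assumption)+

lemma zspan_base: "r \<in> R \<Longrightarrow> r \<in> zspan R"
  by (metis zspan.zspan_add zspan.zspan_zero add_0)

lemma zspan_plus': assumes "g \<in> zspan R" shows "h \<in> zspan R \<Longrightarrow> g + h \<in> zspan R"
proof (induction h rule: zspan_induct)
  case zero then show ?case using assms by simp
next
  case (add h r)
  then show ?case using zspan.zspan_add[of "g + h" R r] by (simp add: add.assoc)
next
  case (diff h r)
  then show ?case using zspan.zspan_diff[of "g + h" R r] by (simp add: add_diff_eq)
qed

lemma zspan_plus: "g \<in> zspan R \<Longrightarrow> h \<in> zspan R \<Longrightarrow> g + h \<in> zspan R"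
  using zspan_plus' by blast

lemma zspan_uminus: "g \<in> zspan R \<Longrightarrow> - g \<in> zspan R"
proof (induction g rule: zspan_induct)
  case zero then show ?case by (simp add: zspan.zspan_zero)
next
  case (add g r)
  then show ?case using zspan.zspan_diff[of "- g" R r] by simp
next
  case (diff g r)
  then show ?case using zspan.zspan_add[of "- g" R r] by simp
qed

lemma zspan_minus: "g \<in> zspan R \<Longrightarrow> h \<in> zspan R \<Longrightarrow> g - h \<in> zspan R"
  using zspan_plus[of g R "-h"] zspan_uminus[of h R] by simp

lemma zspan_subset: "g \<in> zspan R \<Longrightarrow> R \<subseteq> zspan S \<Longrightarrow> g \<in> zspan S"
  by (induction g rule: zspan_induct) (auto intro: zspan_plus zspan_minus zspan.zspan_zero)

lemma zspan_mult: fixes g :: "'x \<Rightarrow> int" assumes "g \<in> zspan R" shows "(\<lambda>v. k * g v) \<in> zspan R"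
proof -
  have pos: "(\<lambda>v. int m * g v) \<in> zspan R" for m
  proof (induction m)
    case 0 then show ?case using zspan.zspan_zero[of R] by (simp add: zero_fun_def)
  next
    case (Suc m)
    have "(\<lambda>v. int (Suc m) * g v) = (\<lambda>v. int m * g v) + g" by (auto simp: algebra_simps)
    then show ?case using zspan_plus[OF Suc assms] by simp
  qed
  show ?thesis
  proof (cases "k \<ge> 0")
    case True then obtain m where "k = int m" by (metis nonneg_eq_int)
    then show ?thesis using pos by simp
  next
    case False then obtain m where "k = - int m" by (metis le_cases neg_0_le_iff_le nonneg_eq_int add.inverse_inverse)
    then have "(\<lambda>v. k * g v) = - (\<lambda>v. int m * g v)" by auto
    then show ?thesis using zspan_uminus[OF pos] by simp
  qed
qed

lemma zspan_closed:
  assumes "g \<in> zspan R" "R \<subseteq> S" "0 \<in> S" "\<And>g h. g \<in> S \<Longrightarrow> h \<in> S \<Longrightarrow> g + h \<in> S"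
    "\<And>g h. g \<in> S \<Longrightarrow> h \<in> S \<Longrightarrow> g - h \<in> S"
  shows "g \<in> S"
  using assms(1) by (induction g rule: zspan_induct) (use assms in auto)

lemma free_ab_iff: "f \<in> free_ab MC NC \<longleftrightarrow> fs f \<and> (\<forall>z. f z \<noteq> 0 \<longrightarrow> z \<in> MC \<times> NC)"
  by (auto simp: free_ab_def fs_def)

lemma free_ab_zero[simp]: "0 \<in> free_ab MC NC" by (simp add: free_ab_iff)
lemma free_ab_add: "f \<in> free_ab MC NC \<Longrightarrow> g \<in> free_ab MC NC \<Longrightarrow> f + g \<in> free_ab MC NC"
  by (auto simp: free_ab_iff fs_add) (metis add.right_neutral)+
lemma free_ab_diff: "f \<in> free_ab MC NC \<Longrightarrow> g \<in> free_ab MC NC \<Longrightarrow> f - g \<in> free_ab MC NC"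
  by (auto simp: free_ab_iff fs_diff) (metis diff_zero)+
lemma free_ab_uminus: "f \<in> free_ab MC NC \<Longrightarrow> - f \<in> free_ab MC NC"
  by (auto simp: free_ab_iff fs_uminus)
lemma free_ab_delta: "x \<in> MC \<Longrightarrow> y \<in> NC \<Longrightarrow> delta x y \<in> free_ab MC NC"
  by (simp add: free_ab_iff) (simp add: delta_def split: if_splits)

definition deltas :: "'m set \<Rightarrow> 'n set \<Rightarrow> ('m \<times> 'n \<Rightarrow> int) set" where
  "deltas MC NC = {delta x y | x y. x \<in> MC \<and> y \<in> NC}"

lemma zspan_deltas_free: assumes "g \<in> zspan (deltas MC NC)" shows "g \<in> free_ab MC NC"
  using zspan_closed[OF assms, of "free_ab MC NC"] by (auto simp: deltas_def intro: free_ab_add free_ab_diff free_ab_delta)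

lemma free_ab_zspan: fixes MC :: "'m set" and NC :: "'n set" and f :: "'m \<times> 'n \<Rightarrow> int"
  assumes "f \<in> free_ab MC NC" shows "f \<in> zspan (deltas MC NC)"
proof -
  have "\<forall>f :: 'm \<times> 'n \<Rightarrow> int. {z. f z \<noteq> 0} \<subseteq> S \<and> S \<subseteq> MC \<times> NC \<longrightarrow> f \<in> zspan (deltas MC NC)" if "finite S" for S
    using that
  proof (induction S rule: finite_induct)
    case empty
    show ?case
    proof (intro allI impI)
      fix f :: "'m \<times> 'n \<Rightarrow> int" assume "{z. f z \<noteq> 0} \<subseteq> {} \<and> {} \<subseteq> MC \<times> NC"
      then have "f = 0" by (auto simp: fun_eq_iff)
      then show "f \<in> zspan (deltas MC NC)" by (simp add: zspan.zspan_zero)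
    qed
  next
    case (insert z S)
    show ?case
    proof (intro allI impI)
      fix f :: "'m \<times> 'n \<Rightarrow> int" assume a: "{z. f z \<noteq> 0} \<subseteq> insert z S \<and> insert z S \<subseteq> MC \<times> NC"
      obtain x y where z: "z = (x, y)" by (cases z)
      have "{v. (f(z := 0)) v \<noteq> 0} \<subseteq> S" using a by auto
      then have "f(z := 0) \<in> zspan (deltas MC NC)" using insert.IH a by blast
      moreover have "delta x y \<in> zspan (deltas MC NC)"
        using a z by (intro zspan_base) (auto simp: deltas_def)
      then have "(\<lambda>v. f z * delta x y v) \<in> zspan (deltas MC NC)" by (rule zspan_mult)
      ultimately have "f(z := 0) + (\<lambda>v. f z * delta x y v) \<in> zspan (deltas MC NC)" by (rule zspan_plus)
      moreover have "f(z := 0) + (\<lambda>v. f z * delta x y v) = f"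
        by (auto simp: fun_eq_iff delta_def z)
      ultimately show "f \<in> zspan (deltas MC NC)" by simp
    qed
  qed
  from this[of "{z. f z \<noteq> 0}"] show ?thesis using assms by (auto simp: free_ab_iff fs_def)
qed

lemma fs_free: "fs f \<Longrightarrow> f \<in> free_ab UNIV UNIV" by (simp add: free_ab_iff)

lemma zspan_fs: assumes "R \<subseteq> Collect fs" "g \<in> zspan R" shows "fs g"
  using zspan_closed[OF assms(2), of "Collect fs"] assms(1) by (auto intro: fs_add fs_diff)

lemma zspan_free: assumes "R \<subseteq> free_ab MC NC" "g \<in> zspan R" shows "g \<in> free_ab MC NC"
  using zspan_closed[OF assms(2), of "free_ab MC NC"] assms(1) by (auto intro: free_ab_add free_ab_diff)

lemma W_zspan: assumes "\<And>r. r \<in> R \<Longrightarrow> fs r \<and> W w r = 0" "g \<in> zspan R" shows "W w g = 0"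
proof -
  have "fs g \<and> W w g = 0" using assms(2)
    by (rule zspan_induct[where P="\<lambda>g. fs g \<and> W w g = 0"]) (use assms(1) in \<open>auto simp: W_add W_diff intro: fs_add fs_diff\<close>)
  then show ?thesis by simp
qed

lemma fs_induct[consumes 1, case_names zero add diff]:
  fixes f :: "'m \<times> 'n \<Rightarrow> int"
  assumes "fs f" "P 0"
    "\<And>g x y. fs g \<Longrightarrow> P g \<Longrightarrow> P (g + delta x y)"
    "\<And>g x y. fs g \<Longrightarrow> P g \<Longrightarrow> P (g - delta x y)"
  shows "P f"
proof -
  have "f \<in> zspan (deltas UNIV UNIV)" using assms(1) by (intro free_ab_zspan fs_free)
  then have "fs f \<and> P f"
    by (rule zspan_induct[where P="\<lambda>f. fs f \<and> P f"]) (use assms(2-4) in \<open>auto simp: deltas_def intro: fs_add fs_diff\<close>)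
  then show ?thesis by simp
qed

lemma pushf_sup: "finite S \<Longrightarrow> {z. f z \<noteq> 0} \<subseteq> S \<Longrightarrow> pushf \<phi> f v = (\<Sum>z\<in>{z\<in>S. \<phi> z = v}. f z)"
  unfolding pushf_def by (rule sum.mono_neutral_left) auto

lemma pushf_zero[simp]: "pushf \<phi> 0 = 0" by (simp add: pushf_def fun_eq_iff)

lemma pushf_delta[simp]: "pushf \<phi> (delta x y) = delta (fst (\<phi> (x,y))) (snd (\<phi> (x,y)))"
proof
  fix v
  have "{z. delta x y z \<noteq> 0 \<and> \<phi> z = v} = (if \<phi> (x,y) = v then {(x,y)} else {})"
    by (auto simp: delta_def)
  then show "pushf \<phi> (delta x y) v = delta (fst (\<phi> (x,y))) (snd (\<phi> (x,y))) v"
    by (auto simp: pushf_def delta_def)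
qed

lemma pushf_add: assumes "fs f" "fs g" shows "pushf \<phi> (f + g) = pushf \<phi> f + pushf \<phi> g"
proof
  fix v
  let ?S = "{z. f z \<noteq> 0} \<union> {z. g z \<noteq> 0}"
  have fin: "finite ?S" using assms by (simp add: fs_def)
  have "pushf \<phi> (f + g) v = (\<Sum>z\<in>{z\<in>?S. \<phi> z = v}. (f+g) z)" by (rule pushf_sup[OF fin]) auto
  also have "\<dots> = (\<Sum>z\<in>{z\<in>?S. \<phi> z = v}. f z) + (\<Sum>z\<in>{z\<in>?S. \<phi> z = v}. g z)"
    by (simp add: sum.distrib)
  also have "(\<Sum>z\<in>{z\<in>?S. \<phi> z = v}. f z) = pushf \<phi> f v" by (rule pushf_sup[OF fin, symmetric]) auto
  also have "(\<Sum>z\<in>{z\<in>?S. \<phi> z = v}. g z) = pushf \<phi> g v" by (rule pushf_sup[OF fin, symmetric]) auto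
  finally show "pushf \<phi> (f + g) v = (pushf \<phi> f + pushf \<phi> g) v" by (simp add: plus_fun_def)
qed

lemma pushf_uminus: "pushf \<phi> (- f) = - pushf \<phi> f"
  by (simp add: pushf_def fun_eq_iff sum_negf)

lemma pushf_diff: "fs f \<Longrightarrow> fs g \<Longrightarrow> pushf \<phi> (f - g) = pushf \<phi> f - pushf \<phi> g"
  using pushf_add[of f "-g" \<phi>] by (simp add: fs_uminus pushf_uminus)

lemma fs_pushf: assumes "fs f" shows "fs (pushf \<phi> f)"
proof -
  have "{v. pushf \<phi> f v \<noteq> 0} \<subseteq> \<phi> ` {z. f z \<noteq> 0}"
  proof
    fix v assume "v \<in> {v. pushf \<phi> f v \<noteq> 0}"
    then have "pushf \<phi> f v \<noteq> 0" by simp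
    then have "{z. f z \<noteq> 0 \<and> \<phi> z = v} \<noteq> {}" unfolding pushf_def by (rule contrapos_nn) (simp only: sum.empty)
    then show "v \<in> \<phi> ` {z. f z \<noteq> 0}" by auto
  qed
  then show ?thesis unfolding fs_def by (rule finite_subset) (use assms in \<open>simp add: fs_def\<close>)
qed

lemma W_pushf: fixes f :: "'m \<times> 'n \<Rightarrow> int" and \<phi> :: "'m \<times> 'n \<Rightarrow> 'p \<times> 'q"
  assumes "fs f" shows "W w (pushf \<phi> f) = W (w \<circ> \<phi>) f"
  using assms by (rule fs_induct[where P="\<lambda>f. W w (pushf \<phi> f) = W (w \<circ> \<phi>) f"])
    (simp_all add: pushf_add pushf_diff W_add W_diff fs_pushf)

lemma pushf_comp: fixes f :: "'m \<times> 'n \<Rightarrow> int" and \<psi> :: "'m \<times> 'n \<Rightarrow> 'p \<times> 'q"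
    and \<phi> :: "'p \<times> 'q \<Rightarrow> 'r \<times> 's"
  assumes "fs f" shows "pushf \<phi> (pushf \<psi> f) = pushf (\<phi> \<circ> \<psi>) f"
  using assms by (rule fs_induct[where P="\<lambda>f. pushf \<phi> (pushf \<psi> f) = pushf (\<phi> \<circ> \<psi>) f"])
    (simp_all add: pushf_add pushf_diff fs_pushf)

lemma free_ab_pushf:
  assumes "f \<in> free_ab MC NC" "\<And>z. z \<in> MC \<times> NC \<Longrightarrow> \<phi> z \<in> MC' \<times> NC'"
  shows "pushf \<phi> f \<in> free_ab MC' NC'"
proof -
  have "f \<in> zspan (deltas MC NC)" using assms(1) by (rule free_ab_zspan)
  then have "f \<in> free_ab MC NC \<and> pushf \<phi> f \<in> free_ab MC' NC'"
  proof (rule zspan_induct[where P="\<lambda>f. f \<in> free_ab MC NC \<and> pushf \<phi> f \<in> free_ab MC' NC'"])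
    show "0 \<in> free_ab MC NC \<and> pushf \<phi> 0 \<in> free_ab MC' NC'" by simp
  next
    fix g r assume g: "g \<in> free_ab MC NC \<and> pushf \<phi> g \<in> free_ab MC' NC'" and r: "r \<in> deltas MC NC"
    then obtain x y where xy: "r = delta x y" "x \<in> MC" "y \<in> NC" by (auto simp: deltas_def)
    obtain a b where ab: "\<phi> (x, y) = (a, b)" by (cases "\<phi> (x, y)")
    have abm: "a \<in> MC'" "b \<in> NC'" using assms(2)[of "(x,y)"] xy ab by auto
    have fsg: "fs g" using g by (simp add: free_ab_iff)
    show "g + r \<in> free_ab MC NC \<and> pushf \<phi> (g + r) \<in> free_ab MC' NC'"
      using g xy ab abm fsg by (auto simp: pushf_add intro!: free_ab_add free_ab_delta)
  next
    fix g r assume g: "g \<in> free_ab MC NC \<and> pushf \<phi> g \<in> free_ab MC' NC'" and r: "r \<in> deltas MC NC"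
    then obtain x y where xy: "r = delta x y" "x \<in> MC" "y \<in> NC" by (auto simp: deltas_def)
    obtain a b where ab: "\<phi> (x, y) = (a, b)" by (cases "\<phi> (x, y)")
    have abm: "a \<in> MC'" "b \<in> NC'" using assms(2)[of "(x,y)"] xy ab by auto
    have fsg: "fs g" using g by (simp add: free_ab_iff)
    show "g - r \<in> free_ab MC NC \<and> pushf \<phi> (g - r) \<in> free_ab MC' NC'"
      using g xy ab abm fsg by (auto simp: pushf_diff intro!: free_ab_diff free_ab_delta)
  qed
  then show ?thesis by simp
qed

lemma coset_zero: "coset (zspan R) 0 = zspan R"
  by (simp add: coset_def)

lemma coset_eqI: assumes "f - g \<in> zspan R" shows "coset (zspan R) f = coset (zspan R) g"
proof -
  have a: "coset (zspan R) f \<subseteq> coset (zspan R) g" if "f - g \<in> zspan R" for f g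
  proof
    fix x assume "x \<in> coset (zspan R) f"
    then obtain s where s: "s \<in> zspan R" "x = f + s" by (auto simp: coset_def)
    have "(f - g) + s \<in> zspan R" using zspan_plus[OF that s(1)] .
    moreover have "x = g + ((f - g) + s)" using s by (simp add: algebra_simps)
    ultimately show "x \<in> coset (zspan R) g" unfolding coset_def by (rule rev_image_eqI)
  qed
  have "g - f \<in> zspan R" using zspan_uminus[OF assms] by simp
  then show ?thesis using a assms by blast
qed

lemma coset_memZ: "f \<in> zspan R \<Longrightarrow> coset (zspan R) f = zspan R"
  using coset_eqI[of f 0 R] coset_zero[of R] by simp

lemma setadd_coset: "setadd (coset (zspan R) f) (coset (zspan R) g) = coset (zspan R) (f + g)"
proof
  show "setadd (coset (zspan R) f) (coset (zspan R) g) \<subseteq> coset (zspan R) (f + g)"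
  proof
    fix x assume "x \<in> setadd (coset (zspan R) f) (coset (zspan R) g)"
    then obtain s t where "s \<in> zspan R" "t \<in> zspan R" "x = (f + s) + (g + t)"
      by (auto simp: setadd_def coset_def)
    then show "x \<in> coset (zspan R) (f + g)"
      unfolding coset_def by (intro image_eqI[of _ _ "s + t"]) (auto simp: algebra_simps intro: zspan_plus)
  qed
next
  show "coset (zspan R) (f + g) \<subseteq> setadd (coset (zspan R) f) (coset (zspan R) g)"
  proof
    fix x assume "x \<in> coset (zspan R) (f + g)"
    then obtain s where s: "s \<in> zspan R" "x = f + g + s" by (auto simp: coset_def)
    have "f + 0 \<in> coset (zspan R) f" unfolding coset_def by (rule imageI) (rule zspan.zspan_zero)
    moreover have "g + s \<in> coset (zspan R) g" unfolding coset_def using s by auto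
    moreover have "x = (f + 0) + (g + s)" using s by (simp add: algebra_simps)
    ultimately show "x \<in> setadd (coset (zspan R) f) (coset (zspan R) g)"
      unfolding setadd_def by blast
  qed
qed

lemma tmap_coset:
  assumes img: "pushf \<phi> ` zspan R \<subseteq> zspan R'" and fsR: "R \<subseteq> Collect fs" and f: "fs f"
  shows "tmap (zspan R') \<phi> (coset (zspan R) f) = coset (zspan R') (pushf \<phi> f)"
proof
  show "tmap (zspan R') \<phi> (coset (zspan R) f) \<subseteq> coset (zspan R') (pushf \<phi> f)"
  proof
    fix x assume "x \<in> tmap (zspan R') \<phi> (coset (zspan R) f)"
    then obtain t s where ts: "t \<in> zspan R" "s \<in> zspan R'" "x = pushf \<phi> (f + t) + s"
      by (auto simp: tmap_def coset_def)
    have "fs t" using zspan_fs[OF fsR ts(1)] .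
    then have "x = pushf \<phi> f + (pushf \<phi> t + s)" using ts f by (simp add: pushf_add algebra_simps)
    moreover have "pushf \<phi> t + s \<in> zspan R'" using img ts by (auto intro: zspan_plus)
    ultimately show "x \<in> coset (zspan R') (pushf \<phi> f)" by (auto simp: coset_def)
  qed
next
  show "coset (zspan R') (pushf \<phi> f) \<subseteq> tmap (zspan R') \<phi> (coset (zspan R) f)"
  proof
    fix x assume "x \<in> coset (zspan R') (pushf \<phi> f)"
    then obtain s where s: "s \<in> zspan R'" "x = pushf \<phi> f + s" by (auto simp: coset_def)
    have "f + 0 \<in> coset (zspan R) f" unfolding coset_def by (rule imageI) (rule zspan.zspan_zero)
    then show "x \<in> tmap (zspan R') \<phi> (coset (zspan R) f)"
      unfolding tmap_def using s by force
  qed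
qed

lemma the_coset:
  assumes R: "\<And>r. r \<in> R \<Longrightarrow> fs r \<and> W w r = 0" and f: "fs f"
  shows "(THE v. \<exists>g\<in>coset (zspan R) f. v = W w g) = W w f"
proof (rule the_equality)
  show "\<exists>g\<in>coset (zspan R) f. W w f = W w g"
    by (rule bexI[of _ "f + 0"]) (auto simp: coset_def intro: zspan.zspan_zero)
next
  fix v assume "\<exists>g\<in>coset (zspan R) f. v = W w g"
  then obtain s where s: "s \<in> zspan R" "v = W w (f + s)" by (auto simp: coset_def)
  have "fs s" using zspan_fs[of R s] R s by blast
  then show "v = W w f" using s f W_zspan[OF R s(1)] by (simp add: W_add)
qed

lemma fs_tens_rels: "r \<in> tens_rels MC addM ra NC addN la \<Longrightarrow> fs r"
  by (auto simp: tens_rels_def intro!: fs_diff fs_add)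

lemma tens_rels_map:
  assumes cM: "\<And>x. x \<in> MC \<Longrightarrow> \<alpha> x \<in> MC'" and cN: "\<And>y. y \<in> NC \<Longrightarrow> \<beta> y \<in> NC'"
    and aM: "\<And>x x'. x \<in> MC \<Longrightarrow> x' \<in> MC \<Longrightarrow> \<alpha> (addM x x') = addM' (\<alpha> x) (\<alpha> x')"
    and aN: "\<And>y y'. y \<in> NC \<Longrightarrow> y' \<in> NC \<Longrightarrow> \<beta> (addN y y') = addN' (\<beta> y) (\<beta> y')"
    and rM: "\<And>x r. x \<in> MC \<Longrightarrow> \<alpha> (ra x r) = ra' (\<alpha> x) r"
    and lN: "\<And>y r. y \<in> NC \<Longrightarrow> \<beta> (la r y) = la' r (\<beta> y)"
  shows "pushf (\<lambda>(x,y). (\<alpha> x, \<beta> y)) ` zspan (tens_rels MC addM ra NC addN la)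
           \<subseteq> zspan (tens_rels MC' addM' ra' NC' addN' la')"
proof -
  let ?\<phi> = "\<lambda>(x,y). (\<alpha> x, \<beta> y)"
  have rel: "pushf ?\<phi> r \<in> tens_rels MC' addM' ra' NC' addN' la'" if "r \<in> tens_rels MC addM ra NC addN la" for r
  proof -
    from that consider
      (1) x x' y where "r = delta (addM x x') y - delta x y - delta x' y" "x \<in> MC" "x' \<in> MC" "y \<in> NC"
    | (2) x y y' where "r = delta x (addN y y') - delta x y - delta x y'" "x \<in> MC" "y \<in> NC" "y' \<in> NC"
    | (3) x y s where "r = delta (ra x s) y - delta x (la s y)" "x \<in> MC" "y \<in> NC"
      unfolding tens_rels_def by blast
    then show ?thesis
    proof cases
      case 1
      then have "pushf ?\<phi> r = delta (addM' (\<alpha> x) (\<alpha> x')) (\<beta> y) - delta (\<alpha> x) (\<beta> y) - delta (\<alpha> x') (\<beta> y)"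
        by (simp add: pushf_diff fs_diff aM)
      then show ?thesis using 1 cM cN unfolding tens_rels_def by blast
    next
      case 2
      then have "pushf ?\<phi> r = delta (\<alpha> x) (addN' (\<beta> y) (\<beta> y')) - delta (\<alpha> x) (\<beta> y) - delta (\<alpha> x) (\<beta> y')"
        by (simp add: pushf_diff fs_diff aN)
      then show ?thesis using 2 cM cN unfolding tens_rels_def by blast
    next
      case 3
      then have "pushf ?\<phi> r = delta (ra' (\<alpha> x) s) (\<beta> y) - delta (\<alpha> x) (la' s (\<beta> y))"
        by (simp add: pushf_diff fs_diff rM lN)
      then show ?thesis using 3 cM cN unfolding tens_rels_def by blast
    qed
  qed
  show ?thesis
  proof
    fix h assume "h \<in> pushf ?\<phi> ` zspan (tens_rels MC addM ra NC addN la)"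
    then obtain g where g: "g \<in> zspan (tens_rels MC addM ra NC addN la)" "h = pushf ?\<phi> g" by auto
    have "fs g \<and> pushf ?\<phi> g \<in> zspan (tens_rels MC' addM' ra' NC' addN' la')" using g(1)
    proof (rule zspan_induct[where P="\<lambda>g. fs g \<and> pushf ?\<phi> g \<in> zspan (tens_rels MC' addM' ra' NC' addN' la')"])
      show "fs 0 \<and> pushf ?\<phi> 0 \<in> zspan (tens_rels MC' addM' ra' NC' addN' la')"
        by (simp add: zspan.zspan_zero)
    next
      fix g r assume a: "fs g \<and> pushf ?\<phi> g \<in> zspan (tens_rels MC' addM' ra' NC' addN' la')"
        and r: "r \<in> tens_rels MC addM ra NC addN la"
      have fr: "fs r" using r by (rule fs_tens_rels)
      show "fs (g + r) \<and> pushf ?\<phi> (g + r) \<in> zspan (tens_rels MC' addM' ra' NC' addN' la')"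
        using a fr zspan_plus[OF _ zspan_base[OF rel[OF r]]] by (simp add: pushf_add fs_add)
    next
      fix g r assume a: "fs g \<and> pushf ?\<phi> g \<in> zspan (tens_rels MC' addM' ra' NC' addN' la')"
        and r: "r \<in> tens_rels MC addM ra NC addN la"
      have fr: "fs r" using r by (rule fs_tens_rels)
      show "fs (g - r) \<and> pushf ?\<phi> (g - r) \<in> zspan (tens_rels MC' addM' ra' NC' addN' la')"
        using a fr zspan_minus[OF _ zspan_base[OF rel[OF r]]] by (simp add: pushf_diff fs_diff)
    qed
    then show "h \<in> zspan (tens_rels MC' addM' ra' NC' addN' la')" using g by simp
  qed
qed


section \<open>Tensoring proj_mod w with a bimodule\<close>

definition goodC :: "('c, 'a) bimod \<Rightarrow> bool" where
  "goodC C \<longleftrightarrow>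
    (\<forall>c\<in>carr C. \<forall>c'\<in>carr C. add C c c' \<in> carr C) \<and>
    (\<forall>c\<in>carr C. \<forall>r. lact C r c \<in> carr C) \<and>
    (\<forall>c\<in>carr C. \<forall>b. ract C c b \<in> carr C) \<and>
    (\<forall>c\<in>carr C. \<forall>c'\<in>carr C. \<forall>b. ract C (add C c c') b = add C (ract C c b) (ract C c' b)) \<and>
    (\<forall>c\<in>carr C. \<forall>r b. ract C (lact C r c) b = lact C r (ract C c b)) \<and>
    zer C \<in> carr C \<and> add C (zer C) (zer C) = zer C \<and> (\<forall>r. lact C r (zer C) = zer C)"

definition dgood :: "('c, 'a) bimod \<Rightarrow> ('d, 'a) bimod \<Rightarrow> ('c \<Rightarrow> 'd) \<Rightarrow> bool" where
  "dgood C C' \<psi> \<longleftrightarrow>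
    (\<forall>c\<in>carr C. \<psi> c \<in> carr C') \<and>
    (\<forall>c\<in>carr C. \<forall>c'\<in>carr C. \<psi> (add C c c') = add C' (\<psi> c) (\<psi> c')) \<and>
    (\<forall>c\<in>carr C. \<forall>r. \<psi> (lact C r c) = lact C' r (\<psi> c))"

lemma dgood_ract: "goodC C \<Longrightarrow> dgood C C (\<lambda>c. ract C c b)"
  by (simp add: goodC_def dgood_def)

lemma dgood_zer: "goodC C' \<Longrightarrow> dgood C C' (\<lambda>c. zer C')"
  by (simp add: goodC_def dgood_def)

abbreviation "mA w \<equiv> {w * a | a. True}"

definition RA :: "'a::ring_1 \<Rightarrow> ('c, 'a) bimod \<Rightarrow> ('a \<times> 'c \<Rightarrow> int) set" where
  "RA w C = tens_rels (mA w) (+) (*) (carr C) (add C) (lact C)"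

lemma rel_A_proj: "rel_A (proj_mod w) C = zspan (RA w C)"
  by (simp add: rel_A_def RA_def proj_mod_def)

lemma RA_fs: "RA w C \<subseteq> Collect fs"
  by (auto simp: RA_def intro: fs_tens_rels)

lemma mA_add: fixes w :: "'a::ring_1" shows "x \<in> mA w \<Longrightarrow> y \<in> mA w \<Longrightarrow> x + y \<in> mA w"
  by auto (metis distrib_left)
lemma mA_mult: fixes w :: "'a::ring_1" shows "x \<in> mA w \<Longrightarrow> x * b \<in> mA w"
  by auto (metis mult.assoc)
lemma mA_zero: fixes w :: "'a::ring_1" shows "0 \<in> mA w" by (rule CollectI, rule exI[of _ 0]) simp
lemma mA_uminus: fixes w :: "'a::ring_1" shows "x \<in> mA w \<Longrightarrow> - x \<in> mA w"
  by auto (metis mult_minus_right)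

lemma proj_simps[simp]: "carr (proj_mod w) = mA w" "add (proj_mod w) = (+)" "ract (proj_mod w) = (*)"
  "zer (proj_mod w) = 0"
  by (simp_all add: proj_mod_def)

lemma tens_carr: "carr (tens_A (proj_mod w) C) = coset (zspan (RA w C)) ` free_ab (mA w) (carr C)"
  by (simp add: tens_A_def rel_A_proj)
lemma tens_add: "add (tens_A (proj_mod w) C) = setadd"
  by (simp add: tens_A_def)
lemma tens_zer: "zer (tens_A (proj_mod w) C) = zspan (RA w C)"
  by (simp add: tens_A_def rel_A_proj)

lemma tens_map:
  assumes d: "dgood C C' \<psi>" and f: "fs f"
  shows "tmap (zspan (RA w C')) (\<lambda>(p, c). (p, \<psi> c)) (coset (zspan (RA w C)) f)
       = coset (zspan (RA w C')) (pushf (\<lambda>(p, c). (p, \<psi> c)) f)"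
proof (rule tmap_coset[OF _ RA_fs f])
  show "pushf (\<lambda>(p, c). (p, \<psi> c)) ` zspan (RA w C) \<subseteq> zspan (RA w C')"
    unfolding RA_def
    using tens_rels_map[where \<alpha>="\<lambda>x. x" and \<beta>=\<psi> and MC="mA w" and MC'="mA w" and NC="carr C" and NC'="carr C'"
        and addM="(+)" and addM'="(+)" and ra="(*)" and ra'="(*)" and addN="add C" and addN'="add C'"
        and la="lact C" and la'="lact C'"] d
    by (simp add: dgood_def)
qed

lemma tens_map_free:
  assumes d: "dgood C C' \<psi>" and f: "f \<in> free_ab (mA w) (carr C)"
  shows "pushf (\<lambda>(p, c). (p, \<psi> c)) f \<in> free_ab (mA w) (carr C')"
  using f by (rule free_ab_pushf) (use d in \<open>auto simp: dgood_def\<close>)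

lemma tens_ract:
  assumes g: "goodC C" and f: "fs f"
  shows "ract (tens_A (proj_mod w) C) (coset (zspan (RA w C)) f) b
       = coset (zspan (RA w C)) (pushf (\<lambda>(p, c). (p, ract C c b)) f)"
  using tens_map[OF dgood_ract[OF g] f] by (simp add: tens_A_def rel_A_proj)

lemma tens_ract_zero:
  assumes g: "goodC C"
  shows "ract (tens_A (proj_mod w) C) (zspan (RA w C)) b = zspan (RA w C)"
  using tens_ract[OF g fs_zero, of w b] by (simp add: coset_zero)

lemma tens_coset_carr: "f \<in> free_ab (mA w) (carr C) \<Longrightarrow> coset (zspan (RA w C)) f \<in> carr (tens_A (proj_mod w) C)"
  by (simp add: tens_carr)

lemma tens_Z_carr: "zspan (RA w C) \<in> carr (tens_A (proj_mod w) C)"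
  using tens_coset_carr[OF free_ab_zero, of w C] by (simp add: coset_zero)

lemma setadd_Z: "setadd (zspan R) (zspan R) = zspan R"
  using setadd_coset[of R 0 0] by (simp add: coset_zero)

lemma RA_rel1: "x \<in> mA w \<Longrightarrow> x' \<in> mA w \<Longrightarrow> y \<in> carr C \<Longrightarrow>
   delta (x + x') y - delta x y - delta x' y \<in> zspan (RA w C)"
  by (rule zspan_base) (unfold RA_def tens_rels_def, blast)

lemma RA_rel2: "x \<in> mA w \<Longrightarrow> y \<in> carr C \<Longrightarrow> y' \<in> carr C \<Longrightarrow>
   delta x (add C y y') - delta x y - delta x y' \<in> zspan (RA w C)"
  by (rule zspan_base) (unfold RA_def tens_rels_def, blast)

lemma RA_rel3: "x \<in> mA w \<Longrightarrow> y \<in> carr C \<Longrightarrow>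
   delta (x * r) y - delta x (lact C r y) \<in> zspan (RA w C)"
  by (rule zspan_base) (unfold RA_def tens_rels_def, blast)

lemma RA_zer: assumes "goodC C" "x \<in> mA w" shows "delta x (zer C) \<in> zspan (RA w C)"
proof -
  have "delta x (add C (zer C) (zer C)) - delta x (zer C) - delta x (zer C) \<in> zspan (RA w C)"
    using assms by (intro RA_rel2) (auto simp: goodC_def)
  then have "- delta x (zer C) \<in> zspan (RA w C)" using assms(1) by (simp add: goodC_def)
  from zspan_uminus[OF this] show ?thesis by simp
qed

lemma RA_zero: assumes "y \<in> carr C" shows "delta 0 y \<in> zspan (RA w C)"
proof -
  have "delta (0 + 0) y - delta 0 y - delta 0 y \<in> zspan (RA w C)"
    using assms mA_zero[of w] by (intro RA_rel1)
  then have "- delta 0 y \<in> zspan (RA w C)" by simp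
  from zspan_uminus[OF this] show ?thesis by simp
qed

lemma free_in_Z:
  assumes "\<And>x y. x \<in> MC \<Longrightarrow> y \<in> NC \<Longrightarrow> delta x y \<in> zspan R" "f \<in> free_ab MC NC"
  shows "f \<in> zspan R"
  using free_ab_zspan[OF assms(2)] by (rule zspan_subset) (auto simp: deltas_def assms(1))


locale L =
  fixes smult :: "'k::field \<Rightarrow> 'a::ring_1 \<Rightarrow> 'a" and u w :: 'a
  assumes uu: "u * u = u"
    and sm: "\<forall>c a b. smult c (a * b) = smult c a * b \<and> smult c (a * b) = a * smult c b"
begin

lemma central: "smult c 1 * y = y * smult c 1"
  using sm by (metis mult_1_left mult_1_right)

abbreviation "Ae \<equiv> {a * u | a. True}"
abbreviation "eA \<equiv> mA u"

definition Rk where "Rk = tens_rels Ae (+) (\<lambda>x c. x * smult c 1) eA (+) (\<lambda>c y. smult c 1 * y)"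

lemma rel_k_eq: "rel_k smult u = zspan Rk" by (simp add: rel_k_def Rk_def)

abbreviation "FK \<equiv> free_ab Ae eA"
abbreviation "Ck \<equiv> tens_k_bimod smult u"
abbreviation "cosk \<equiv> coset (zspan Rk)"

lemma Rk_fs: "Rk \<subseteq> Collect fs" by (auto simp: Rk_def intro: fs_tens_rels)

lemma Ae_add: "x \<in> Ae \<Longrightarrow> y \<in> Ae \<Longrightarrow> x + y \<in> Ae" by auto (metis distrib_right)
lemma Ae_lmult: "x \<in> Ae \<Longrightarrow> r * x \<in> Ae" by (auto simp: mult.assoc[symmetric])
lemma Ae_u: "x \<in> Ae \<Longrightarrow> x * u = x" using uu by (auto simp: mult.assoc)
lemma eA_u: "y \<in> eA \<Longrightarrow> u * y = y" using uu by (auto simp: mult.assoc[symmetric])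
lemma u_Ae: "u \<in> Ae" by (rule CollectI, rule exI[of _ u]) (simp add: uu)
lemma u_eA: "u \<in> eA" by (rule CollectI, rule exI[of _ u]) (simp add: uu)
lemma eA_smult: "y \<in> eA \<Longrightarrow> smult c 1 * y \<in> eA"
  by (auto simp: mult.assoc[symmetric] central) (metis mult.assoc)

lemma Ck_simps: "carr Ck = cosk ` FK" "add Ck = setadd" "zer Ck = zspan Rk"
  by (simp_all add: tens_k_bimod_def rel_k_eq)

lemma Ck_lact: assumes "fs \<xi>" shows "lact Ck r (cosk \<xi>) = cosk (pushf (\<lambda>(x,y). (r * x, y)) \<xi>)"
proof -
  have "pushf (\<lambda>(x,y). (r * x, y)) ` zspan Rk \<subseteq> zspan Rk"
    unfolding Rk_def
    by (rule tens_rels_map[where \<alpha>="\<lambda>x. r * x" and \<beta>="\<lambda>y. y", simplified])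
       (auto simp: distrib_left mult.assoc[symmetric])
  then show ?thesis using tmap_coset[OF _ Rk_fs assms] by (simp add: tens_k_bimod_def rel_k_eq)
qed

lemma Ck_ract: assumes "fs \<xi>" shows "ract Ck (cosk \<xi>) b = cosk (pushf (\<lambda>(x,y). (x, y * b)) \<xi>)"
proof -
  have "pushf (\<lambda>(x,y). (x, y * b)) ` zspan Rk \<subseteq> zspan Rk"
    unfolding Rk_def
    by (rule tens_rels_map[where \<alpha>="\<lambda>x. x" and \<beta>="\<lambda>y. y * b", simplified])
       (auto simp: distrib_right mult.assoc)
  then show ?thesis using tmap_coset[OF _ Rk_fs assms] by (simp add: tens_k_bimod_def rel_k_eq)
qed

lemma FK_fs: "\<xi> \<in> FK \<Longrightarrow> fs \<xi>" by (simp add: free_ab_iff)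

lemma FK_lact: "\<xi> \<in> FK \<Longrightarrow> pushf (\<lambda>(x,y). (r * x, y)) \<xi> \<in> FK"
  by (erule free_ab_pushf) (auto simp: mult.assoc[symmetric])
lemma FK_ract: "\<xi> \<in> FK \<Longrightarrow> pushf (\<lambda>(x,y). (x, y * b)) \<xi> \<in> FK"
  by (erule free_ab_pushf) (auto simp: mult.assoc)

lemma Rk_W: assumes "r \<in> Rk" shows "fs r \<and> W (\<lambda>z. fst z * snd z) r = 0"
proof
  show "fs r" using assms unfolding Rk_def by (rule fs_tens_rels)
  from assms consider
      (1) x x' y where "r = delta (x + x') y - delta x y - delta x' y"
    | (2) x y y' where "r = delta x (y + y') - delta x y - delta x y'"
    | (3) x y c where "r = delta (x * smult c 1) y - delta x (smult c 1 * y)"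
    unfolding Rk_def tens_rels_def by blast
  then show "W (\<lambda>z. fst z * snd z) r = 0"
    by cases (simp_all add: W_diff fs_diff distrib_left distrib_right mult.assoc)
qed

lemma mult_map_cos: "fs \<xi> \<Longrightarrow> mult_map (cosk \<xi>) = msum \<xi>"
  unfolding mult_map_def msum_W by (rule the_coset[OF Rk_W])

abbreviation "C n \<equiv> Ci_term smult u n"

lemma C_m1: "carr (C (-1)) = Inl ` carr Ck"
  "add (C (-1)) x y = Inl (setadd (projl x) (projl y))"
  "lact (C (-1)) r x = Inl (lact Ck r (projl x))"
  "ract (C (-1)) x b = Inl (ract Ck (projl x) b)"
  "zer (C (-1)) = Inl (zspan Rk)"
  by (simp_all add: Ci_term_def Ck_simps)

lemma C_0: "carr (C 0) = range Inr"
  "add (C 0) x y = Inr (projr x + projr y)"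
  "lact (C 0) r x = Inr (r * projr x)"
  "ract (C 0) x b = Inr (projr x * b)"
  "zer (C 0) = Inr 0"
  by (simp_all add: Ci_term_def)

lemma C_other: assumes "n \<noteq> -1" "n \<noteq> 0"
  shows "carr (C n) = {Inr 0}" "add (C n) x y = Inr 0" "lact (C n) r x = Inr 0"
   "ract (C n) x b = Inr 0" "zer (C n) = Inr 0"
  using assms by (simp_all add: Ci_term_def)

lemma good_other: "n \<noteq> -1 \<Longrightarrow> n \<noteq> 0 \<Longrightarrow> goodC (C n)"
  by (simp add: goodC_def C_other)

lemma good_0: "goodC (C 0)"
  by (auto simp: goodC_def C_0 distrib_right mult.assoc)

lemma cosk_add: "setadd (cosk \<xi>) (cosk \<eta>) = cosk (\<xi> + \<eta>)" by (rule setadd_coset)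

lemma m1_elem: "c \<in> carr (C (-1)) \<Longrightarrow> \<exists>\<xi>\<in>FK. c = Inl (cosk \<xi>)"
  by (auto simp: C_m1 Ck_simps)

lemma m1_in: "\<xi> \<in> FK \<Longrightarrow> Inl (cosk \<xi>) \<in> carr (C (-1))"
  by (auto simp: C_m1 Ck_simps)

lemma m1_add: "add (C (-1)) (Inl (cosk \<xi>)) (Inl (cosk \<eta>)) = Inl (cosk (\<xi> + \<eta>))"
  by (simp add: C_m1 cosk_add)

lemma m1_lact: "\<xi> \<in> FK \<Longrightarrow> lact (C (-1)) r (Inl (cosk \<xi>)) = Inl (cosk (pushf (\<lambda>(x,y). (r * x, y)) \<xi>))"
  by (simp add: C_m1 Ck_lact FK_fs)

lemma m1_ract: "\<xi> \<in> FK \<Longrightarrow> ract (C (-1)) (Inl (cosk \<xi>)) b = Inl (cosk (pushf (\<lambda>(x,y). (x, y * b)) \<xi>))"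
  by (simp add: C_m1 Ck_ract FK_fs)

lemma gm1_add: "\<forall>c\<in>carr (C (-1)). \<forall>c'\<in>carr (C (-1)). add (C (-1)) c c' \<in> carr (C (-1))"
proof (intro ballI)
  fix c c' assume c: "c \<in> carr (C (-1))" and c': "c' \<in> carr (C (-1))"
  obtain \<xi> where x: "\<xi> \<in> FK" "c = Inl (cosk \<xi>)" using m1_elem[OF c] by blast
  obtain \<eta> where y: "\<eta> \<in> FK" "c' = Inl (cosk \<eta>)" using m1_elem[OF c'] by blast
  show "add (C (-1)) c c' \<in> carr (C (-1))"
    unfolding x(2) y(2) m1_add by (rule m1_in) (rule free_ab_add[OF x(1) y(1)])
qed

lemma gm1_radd: "\<forall>c\<in>carr (C (-1)). \<forall>c'\<in>carr (C (-1)). \<forall>b.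
   ract (C (-1)) (add (C (-1)) c c') b = add (C (-1)) (ract (C (-1)) c b) (ract (C (-1)) c' b)"
proof (intro ballI allI)
  fix c c' b assume c: "c \<in> carr (C (-1))" and c': "c' \<in> carr (C (-1))"
  obtain \<xi> where x: "\<xi> \<in> FK" "c = Inl (cosk \<xi>)" using m1_elem[OF c] by blast
  obtain \<eta> where y: "\<eta> \<in> FK" "c' = Inl (cosk \<eta>)" using m1_elem[OF c'] by blast
  show "ract (C (-1)) (add (C (-1)) c c') b = add (C (-1)) (ract (C (-1)) c b) (ract (C (-1)) c' b)"
    unfolding x(2) y(2) m1_add m1_ract[OF x(1)] m1_ract[OF y(1)] m1_ract[OF free_ab_add[OF x(1) y(1)]]
      pushf_add[OF FK_fs[OF x(1)] FK_fs[OF y(1)]] by (rule refl)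
qed

lemma gm1_lact: "\<forall>c\<in>carr (C (-1)). \<forall>r. lact (C (-1)) r c \<in> carr (C (-1))"
proof (intro ballI allI)
  fix c r assume c: "c \<in> carr (C (-1))"
  obtain \<xi> where x: "\<xi> \<in> FK" "c = Inl (cosk \<xi>)" using m1_elem[OF c] by blast
  show "lact (C (-1)) r c \<in> carr (C (-1))"
    unfolding x(2) m1_lact[OF x(1)] by (rule m1_in) (rule FK_lact[OF x(1)])
qed

lemma gm1_ract: "\<forall>c\<in>carr (C (-1)). \<forall>b. ract (C (-1)) c b \<in> carr (C (-1))"
proof (intro ballI allI)
  fix c b assume c: "c \<in> carr (C (-1))"
  obtain \<xi> where x: "\<xi> \<in> FK" "c = Inl (cosk \<xi>)" using m1_elem[OF c] by blast
  show "ract (C (-1)) c b \<in> carr (C (-1))"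
    unfolding x(2) m1_ract[OF x(1)] by (rule m1_in) (rule FK_ract[OF x(1)])
qed

lemma gm1_comm: "\<forall>c\<in>carr (C (-1)). \<forall>(r::'a) (b::'a). ract (C (-1)) (lact (C (-1)) r c) b = lact (C (-1)) r (ract (C (-1)) c b)"
proof (intro ballI allI)
  fix c and r b :: 'a assume c: "c \<in> carr (C (-1))"
  obtain \<xi> where x: "\<xi> \<in> FK" "c = Inl (cosk \<xi>)" using m1_elem[OF c] by blast
  have comm: "(\<lambda>(x,y). (x, y * b)) \<circ> (\<lambda>(x,y). (r * x, y)) = (\<lambda>(x,y). (r * x, y)) \<circ> (\<lambda>(x,y). (x, y * b))"
    by (auto simp: fun_eq_iff)
  show "ract (C (-1)) (lact (C (-1)) r c) b = lact (C (-1)) r (ract (C (-1)) c b)"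
    unfolding x(2) m1_lact[OF x(1)] m1_ract[OF x(1)] m1_ract[OF FK_lact[OF x(1)]] m1_lact[OF FK_ract[OF x(1)]]
      pushf_comp[OF FK_fs[OF x(1)]] comm by (rule refl)
qed

lemma cosk0: "zspan Rk = cosk 0" by (simp add: coset_zero)

lemma gm1_zer: "zer (C (-1)) \<in> carr (C (-1))"
  using m1_in[of 0] by (simp add: C_m1(5) coset_zero)

lemma gm1_zadd: "add (C (-1)) (zer (C (-1))) (zer (C (-1))) = zer (C (-1))"
  using m1_add[of 0 0] by (simp add: C_m1(5) coset_zero)

lemma gm1_zlact: "lact (C (-1)) r (zer (C (-1))) = zer (C (-1))"
  using m1_lact[of 0 r] by (simp add: C_m1(5) coset_zero)

lemma good_m1: "goodC (C (-1))"
  unfolding goodC_def by (intro conjI allI gm1_add gm1_radd gm1_lact gm1_ract gm1_comm gm1_zer gm1_zadd gm1_zlact)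

lemma good_C: "goodC (C n)"
proof (cases "n = -1")
  case True then show ?thesis using good_m1 by simp
next
  case False
  show ?thesis
  proof (cases "n = 0")
    case True then show ?thesis using good_0 by simp
  next
    case False2: False
    show ?thesis by (rule good_other[OF False False2])
  qed
qed

end

lemma sum_in_mA: fixes w :: "'a::ring_1"
  shows "finite S \<Longrightarrow> (\<And>z. z \<in> S \<Longrightarrow> g z \<in> mA w) \<Longrightarrow> sum g S \<in> mA w"
proof (induction S rule: finite_induct)
  case empty show ?case unfolding sum.empty by (rule mA_zero)
next
  case (insert x F)
  have a: "g x \<in> mA w" by (rule insert.prems) simp
  have b: "sum g F \<in> mA w" by (rule insert.IH) (rule insert.prems, simp)
  show ?case unfolding sum.insert[OF insert.hyps] by (rule mA_add[OF a b])
qed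

lemma W_in_mA: fixes w :: "'a::ring_1"
  assumes "fs f" "\<And>z. f z \<noteq> 0 \<Longrightarrow> wt z \<in> mA w" shows "W wt f \<in> mA w"
  unfolding W_def
proof (rule sum_in_mA)
  show "finite {z. f z \<noteq> 0}" using assms(1) by (simp add: fs_def)
  fix z assume "z \<in> {z. f z \<noteq> 0}"
  then obtain a where a: "wt z = w * a" using assms(2) by auto
  have "of_int (f z) * wt z = w * (of_int (f z) * a)"
    unfolding a by (metis mult.assoc mult_of_int_commute)
  then show "of_int (f z) * wt z \<in> mA w" by auto
qed

definition F0 :: "('a::ring_1 \<times> ('b + 'a) \<Rightarrow> int) \<Rightarrow> 'a" where
  "F0 f = W (\<lambda>(p, c). p * projr c) f"


definition F1 :: "('a::ring_1 \<times> (('a \<times> 'a \<Rightarrow> int) set + 'a) \<Rightarrow> int) \<Rightarrow> 'a" where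
  "F1 f = W (\<lambda>(p, c). p * mult_map (projl c)) f"

definition Fbar :: "('a::ring_1 \<times> ('b + 'a) \<Rightarrow> int) set \<Rightarrow> 'a" where
  "Fbar X = (THE v. \<exists>f\<in>X. v = F0 f)"

context L begin

abbreviation "P \<equiv> proj_mod w"
abbreviation "Z n \<equiv> zspan (RA w (C n))"
abbreviation "cz n \<equiv> coset (Z n)"
abbreviation "FT n \<equiv> free_ab (mA w) (carr (C n))"
abbreviation "T n \<equiv> RiA smult u P n"
abbreviation "dT n \<equiv> RiA_d smult u P n"
abbreviation "phi n \<equiv> (\<lambda>(p, c). (p, Ci_d smult u n c))"

lemma T_carr: "carr (T n) = cz n ` FT n" by (simp add: RiA_def tens_carr)
lemma T_add: "add (T n) = setadd" by (simp add: RiA_def tens_add)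
lemma T_ract: "fs f \<Longrightarrow> ract (T n) (cz n f) b = cz n (pushf (\<lambda>(p, c). (p, ract (C n) c b)) f)"
  by (simp add: RiA_def tens_ract[OF good_C])
lemma T_ractZ: "ract (T n) (Z n) b = Z n"
  by (simp add: RiA_def tens_ract_zero[OF good_C])
lemma T_Z: "Z n \<in> carr (T n)" by (simp add: RiA_def tens_Z_carr)
lemma T_cos_in: "f \<in> FT n \<Longrightarrow> cz n f \<in> carr (T n)" by (simp add: T_carr)
lemma FT_fs: "f \<in> FT n \<Longrightarrow> fs f" by (simp add: free_ab_iff)

lemma Ci_d_other: "n \<noteq> -1 \<Longrightarrow> Ci_d smult u n = (\<lambda>c. zer (C (n + 1)))"
  by (simp add: fun_eq_iff Ci_d_def)
lemma Ci_d_m1: "Ci_d smult u (-1) c = Inr (mult_map (projl c))"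
  by (simp add: Ci_d_def)

lemma msum_pushf_l: assumes f: "fs \<xi>" shows "msum (pushf (\<lambda>(x,y). (r * x, y)) \<xi>) = r * msum \<xi>"
proof -
  have eq: "(\<lambda>z. fst z * snd z) \<circ> (\<lambda>(x,y). (r * x, y)) = (\<lambda>z. r * (fst z * snd z))"
    by (auto simp: fun_eq_iff mult.assoc)
  have "msum (pushf (\<lambda>(x,y). (r * x, y)) \<xi>) = W ((\<lambda>z. fst z * snd z) \<circ> (\<lambda>(x,y). (r * x, y))) \<xi>"
    unfolding msum_W by (rule W_pushf[OF f])
  also have "\<dots> = W (\<lambda>z. r * (fst z * snd z)) \<xi>" by (simp only: eq)
  also have "\<dots> = r * msum \<xi>" unfolding msum_W by (rule W_mult_left)
  finally show ?thesis .
qed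

lemma dgood_m1: "dgood (C (-1)) (C 0) (Ci_d smult u (-1))"
  unfolding dgood_def
proof (intro conjI ballI allI)
  fix c assume c: "c \<in> carr (C (-1))"
  show "Ci_d smult u (-1) c \<in> carr (C 0)" by (simp add: Ci_d_m1 C_0)
next
  fix c c' assume c: "c \<in> carr (C (-1))" and c': "c' \<in> carr (C (-1))"
  obtain \<xi> where x: "\<xi> \<in> FK" "c = Inl (cosk \<xi>)" using m1_elem[OF c] by blast
  obtain \<eta> where y: "\<eta> \<in> FK" "c' = Inl (cosk \<eta>)" using m1_elem[OF c'] by blast
  show "Ci_d smult u (-1) (add (C (-1)) c c') = add (C 0) (Ci_d smult u (-1) c) (Ci_d smult u (-1) c')"
    unfolding x(2) y(2) m1_add Ci_d_m1 C_0 sum.sel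
    by (simp add: mult_map_cos[OF fs_add[OF FK_fs[OF x(1)] FK_fs[OF y(1)]]] mult_map_cos[OF FK_fs[OF x(1)]]
        mult_map_cos[OF FK_fs[OF y(1)]] msum_W W_add[OF FK_fs[OF x(1)] FK_fs[OF y(1)]])
next
  fix c r assume c: "c \<in> carr (C (-1))"
  obtain \<xi> where x: "\<xi> \<in> FK" "c = Inl (cosk \<xi>)" using m1_elem[OF c] by blast
  show "Ci_d smult u (-1) (lact (C (-1)) r c) = lact (C 0) r (Ci_d smult u (-1) c)"
    unfolding x(2) m1_lact[OF x(1)] Ci_d_m1 C_0 sum.sel
    by (simp add: mult_map_cos[OF fs_pushf[OF FK_fs[OF x(1)]]] mult_map_cos[OF FK_fs[OF x(1)]]
        msum_pushf_l[OF FK_fs[OF x(1)]])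
qed

lemma dgood_d: "dgood (C n) (C (n + 1)) (Ci_d smult u n)"
proof (cases "n = -1")
  case True then show ?thesis using dgood_m1 by simp
next
  case False then show ?thesis unfolding Ci_d_other[OF False] dgood_def using good_C[of "n + 1"] by (simp add: goodC_def)
qed

lemma T_d: assumes "f \<in> FT n"
  shows "dT n (cz n f) = cz (n + 1) (pushf (phi n) f)" "pushf (phi n) f \<in> FT (n + 1)"
proof -
  show "dT n (cz n f) = cz (n + 1) (pushf (phi n) f)"
    unfolding RiA_d_def rel_A_proj by (rule tens_map[OF dgood_d FT_fs[OF assms]])
  show "pushf (phi n) f \<in> FT (n + 1)" by (rule tens_map_free[OF dgood_d assms])
qed

lemma T_dZ: "dT n (Z n) = Z (n + 1)"
  using T_d[OF free_ab_zero, of n] by (simp add: coset_zero)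

lemma Z_coset: "Z n = cz n 0" by (simp add: coset_zero)

lemma setadd_cos_Z: "setadd (cz n f) (Z n) = cz n f"
  using setadd_coset[of "RA w (C n)" f 0] by (simp add: coset_zero)

lemma triv_FT: assumes "n \<noteq> -1" "n \<noteq> 0" "f \<in> FT n" shows "f \<in> Z n"
proof (rule free_in_Z[OF _ assms(3)])
  fix x y assume "x \<in> mA w" "y \<in> carr (C n)"
  then have "y = zer (C n)" using C_other[OF assms(1,2)] by simp
  then show "delta x y \<in> Z n" using RA_zer[OF good_C \<open>x \<in> mA w\<close>] by simp
qed

lemma triv_carr: assumes "n \<noteq> -1" "n \<noteq> 0" shows "carr (T n) = {Z n}"
  using triv_FT[OF assms] unfolding T_carr by (auto simp: coset_memZ intro!: image_eqI[of _ _ 0])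

end


context L begin

lemma RA0_W: assumes "r \<in> RA w (C 0)" shows "fs r \<and> W (\<lambda>(p, c). p * projr c) r = 0"
proof
  show "fs r" using assms unfolding RA_def by (rule fs_tens_rels)
  from assms consider
      (1) x x' y where "r = delta (x + x') y - delta x y - delta x' y"
    | (2) x y y' where "r = delta x (add (C 0) y y') - delta x y - delta x y'"
    | (3) x y s where "r = delta (x * s) y - delta x (lact (C 0) s y)"
    unfolding RA_def tens_rels_def by blast
  then show "W (\<lambda>(p, c). p * projr c) r = 0"
    by cases (simp_all add: W_diff fs_diff distrib_left distrib_right mult.assoc C_0)
qed

lemma Fbar_cz: "fs f \<Longrightarrow> Fbar (cz 0 f) = F0 f"
  unfolding Fbar_def F0_def by (rule the_coset[OF RA0_W])

lemma F0_in: assumes "f \<in> FT 0" shows "F0 f \<in> mA w"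
  unfolding F0_def
proof (rule W_in_mA)
  show "fs f" using assms by (rule FT_fs)
  fix z assume "f z \<noteq> 0"
  then have "fst z \<in> mA w" using assms by (cases z) (auto simp: free_ab_iff)
  then show "(\<lambda>(p, c). p * projr c) z \<in> mA w" by (cases z) (auto simp: mult.assoc)
qed

lemma F0_delta[simp]: "F0 (delta p c) = p * projr c" by (simp add: F0_def)
lemma F0_add: "fs f \<Longrightarrow> fs g \<Longrightarrow> F0 (f + g) = F0 f + F0 g" by (simp add: F0_def W_add)
lemma F0_diff: "fs f \<Longrightarrow> fs g \<Longrightarrow> F0 (f - g) = F0 f - F0 g" by (simp add: F0_def W_diff)
lemma F0_zero[simp]: "F0 0 = 0" by (simp add: F0_def)

abbreviation "D p \<equiv> delta p (Inr (1::'a) :: 'a cterm)"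

lemma Inr_C0: "Inr a \<in> carr (C 0)" by (simp add: C_0)

lemma D_move: assumes "p \<in> mA w" shows "delta p (Inr a) - D (p * a) \<in> Z 0"
proof -
  have "delta (p * a) (Inr 1) - delta p (lact (C 0) a (Inr 1)) \<in> Z 0"
    using assms by (intro RA_rel3 Inr_C0)
  then have "- (delta p (Inr a) - D (p * a)) \<in> Z 0" by (simp add: C_0)
  from zspan_uminus[OF this] show ?thesis by simp
qed

lemma D_add: "x \<in> mA w \<Longrightarrow> x' \<in> mA w \<Longrightarrow> D (x + x') - D x - D x' \<in> Z 0"
  by (rule RA_rel1) (simp_all add: Inr_C0)

lemma D_zero: "D 0 \<in> Z 0" by (rule RA_zero, rule Inr_C0)

lemma rep0: assumes "f \<in> FT 0" shows "f - D (F0 f) \<in> Z 0"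
proof -
  have "f \<in> zspan (deltas (mA w) (carr (C 0)))" using assms by (rule free_ab_zspan)
  then show ?thesis
  proof (rule zspan_induct[where P="\<lambda>f. f - D (F0 f) \<in> Z 0"])
    show "0 - D (F0 0) \<in> Z 0" using zspan_uminus[OF D_zero] by simp
  next
    fix g r assume g: "g \<in> zspan (deltas (mA w) (carr (C 0)))" and IH: "g - D (F0 g) \<in> Z 0"
      and r: "r \<in> deltas (mA w) (carr (C 0))"
    have gF: "g \<in> FT 0" using g by (rule zspan_deltas_free)
    have fg: "fs g" using gF by (rule FT_fs)
    have Fg: "F0 g \<in> mA w" using gF by (rule F0_in)
    obtain p a where r': "r = delta p (Inr a)" "p \<in> mA w" using r by (auto simp: deltas_def C_0)
    have pa: "p * a \<in> mA w" using r'(2) by (rule mA_mult)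
    have F: "F0 (g + r) = F0 g + p * a" "F0 (g - r) = F0 g - p * a"
      using fg r' by (simp_all add: F0_add F0_diff)
    have e1: "(g + r) - D (F0 (g + r)) = (g - D (F0 g)) + (delta p (Inr a) - D (p * a)) - (D (F0 g + p * a) - D (F0 g) - D (p * a))"
      unfolding F unfolding r'(1) by (simp add: algebra_simps)
    show "(g + r) - D (F0 (g + r)) \<in> Z 0" unfolding e1
      by (intro zspan_minus zspan_plus IH D_move r'(2) D_add Fg pa)
    have Fm: "F0 g - p * a \<in> mA w" using mA_add[OF Fg mA_uminus[OF pa]] by simp
    have e2: "(g - r) - D (F0 (g - r)) = (g - D (F0 g)) - (delta p (Inr a) - D (p * a)) + (D ((F0 g - p * a) + p * a) - D (F0 g - p * a) - D (p * a))"
      unfolding F unfolding r'(1) by (simp add: algebra_simps)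
    show "(g - r) - D (F0 (g - r)) \<in> Z 0" unfolding e2
      by (intro zspan_minus zspan_plus IH D_move r'(2) D_add Fm pa)
  qed
qed

lemma ker0: assumes "f \<in> FT 0" "F0 f = 0" shows "f \<in> Z 0"
  using zspan_plus[OF rep0[OF assms(1)] D_zero] assms(2) by simp

lemma c0_in: "y \<in> eA \<Longrightarrow> Inl (cosk (delta u y)) \<in> carr (C (-1))"
  by (rule m1_in, rule free_ab_delta[OF u_Ae])

lemma gen1: assumes "p \<in> mA w" "x \<in> Ae" "y \<in> eA"
  shows "delta p (Inl (cosk (delta x y))) - delta (p * x) (Inl (cosk (delta u y))) \<in> Z (-1)"
proof -
  have "delta (p * x) (Inl (cosk (delta u y))) - delta p (lact (C (-1)) x (Inl (cosk (delta u y)))) \<in> Z (-1)"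
    by (rule RA_rel3[OF assms(1) c0_in[OF assms(3)]])
  moreover have "lact (C (-1)) x (Inl (cosk (delta u y))) = Inl (cosk (delta x y))"
    using m1_lact[OF free_ab_delta[OF u_Ae assms(3)], of x] by (simp add: Ae_u[OF assms(2)])
  ultimately have "- (delta p (Inl (cosk (delta x y))) - delta (p * x) (Inl (cosk (delta u y)))) \<in> Z (-1)"
    by simp
  from zspan_uminus[OF this] show ?thesis by simp
qed

lemma zer_m1: "Inl (cosk 0) = zer (C (-1))" by (simp add: C_m1 coset_zero)

lemma lt_gen: assumes tri: "\<forall>a. w * a * u = 0" and p: "p \<in> mA w" and c: "c \<in> carr (C (-1))"
  shows "delta p c \<in> Z (-1)"
proof -
  obtain \<xi> where x: "\<xi> \<in> FK" "c = Inl (cosk \<xi>)" using m1_elem[OF c] by blast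
  have gd: "delta p (Inl (cosk (delta x y))) \<in> Z (-1)" if "x \<in> Ae" "y \<in> eA" for x y
  proof -
    have "p * x = 0" using p that(1) tri by (auto simp: mult.assoc) (metis mult.assoc)
    then have "delta (p * x) (Inl (cosk (delta u y))) \<in> Z (-1)" using RA_zero[OF c0_in[OF that(2)]] by simp
    from zspan_plus[OF gen1[OF p that] this] show ?thesis by simp
  qed
  have "\<xi> \<in> zspan (deltas Ae eA)" using x(1) by (rule free_ab_zspan)
  then have "delta p (Inl (cosk \<xi>)) \<in> Z (-1)"
  proof (rule zspan_induct[where P="\<lambda>\<xi>. delta p (Inl (cosk \<xi>)) \<in> Z (-1)"])
    show "delta p (Inl (cosk 0)) \<in> Z (-1)" unfolding zer_m1 by (rule RA_zer[OF good_C p])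
  next
    fix g r assume g: "g \<in> zspan (deltas Ae eA)" and IH: "delta p (Inl (cosk g)) \<in> Z (-1)"
      and r: "r \<in> deltas Ae eA"
    obtain x y where r': "r = delta x y" "x \<in> Ae" "y \<in> eA" using r by (auto simp: deltas_def)
    have gF: "g \<in> FK" using g by (rule zspan_deltas_free)
    have rF: "r \<in> FK" using r' by (simp add: free_ab_delta)
    have rel: "delta p (add (C (-1)) (Inl (cosk g)) (Inl (cosk r))) - delta p (Inl (cosk g)) - delta p (Inl (cosk r)) \<in> Z (-1)"
      by (rule RA_rel2[OF p m1_in[OF gF] m1_in[OF rF]])
    have gr: "delta p (Inl (cosk r)) \<in> Z (-1)" using gd[OF r'(2,3)] r'(1) by simp
    have "delta p (Inl (cosk (g + r))) = (delta p (add (C (-1)) (Inl (cosk g)) (Inl (cosk r))) - delta p (Inl (cosk g)) - delta p (Inl (cosk r))) + delta p (Inl (cosk g)) + delta p (Inl (cosk r))"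
      by (simp add: m1_add)
    then show "delta p (Inl (cosk (g + r))) \<in> Z (-1)" using zspan_plus[OF zspan_plus[OF rel IH] gr] by simp
  next
    fix g r assume g: "g \<in> zspan (deltas Ae eA)" and IH: "delta p (Inl (cosk g)) \<in> Z (-1)"
      and r: "r \<in> deltas Ae eA"
    obtain x y where r': "r = delta x y" "x \<in> Ae" "y \<in> eA" using r by (auto simp: deltas_def)
    have gF: "g \<in> FK" using g by (rule zspan_deltas_free)
    have rF: "r \<in> FK" using r' by (simp add: free_ab_delta)
    have grF: "g - r \<in> FK" using gF rF by (rule free_ab_diff)
    have rel: "delta p (add (C (-1)) (Inl (cosk (g - r))) (Inl (cosk r))) - delta p (Inl (cosk (g - r))) - delta p (Inl (cosk r)) \<in> Z (-1)"
      by (rule RA_rel2[OF p m1_in[OF grF] m1_in[OF rF]])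
    have gr: "delta p (Inl (cosk r)) \<in> Z (-1)" using gd[OF r'(2,3)] r'(1) by simp
    have "delta p (Inl (cosk (g - r))) = delta p (Inl (cosk g)) - delta p (Inl (cosk r)) - (delta p (add (C (-1)) (Inl (cosk (g - r))) (Inl (cosk r))) - delta p (Inl (cosk (g - r))) - delta p (Inl (cosk r)))"
      by (simp add: m1_add)
    then show "delta p (Inl (cosk (g - r))) \<in> Z (-1)" using zspan_minus[OF zspan_minus[OF IH gr] rel] by simp
  qed
  then show ?thesis using x(2) by simp
qed

lemma lt_m1: assumes tri: "\<forall>a. w * a * u = 0" and f: "f \<in> FT (-1)" shows "f \<in> Z (-1)"
  by (rule free_in_Z[OF lt_gen[OF tri] f])

lemma lt_carr: assumes tri: "\<forall>a. w * a * u = 0" shows "carr (T (-1)) = {Z (-1)}"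
  using lt_m1[OF tri] unfolding T_carr by (auto simp: coset_memZ intro!: image_eqI[of _ _ 0])

end


locale L1 = L smult u w for smult :: "'k::field \<Rightarrow> 'a::ring_1 \<Rightarrow> 'a" and u w :: 'a +
  assumes wu: "w = u" and corner: "corner_iso_field smult u"
begin

lemma corner_smult: assumes "z \<in> {u * a * u | a. True}" shows "\<exists>c. z = smult c 1 * u"
proof -
  obtain \<phi> :: "'k \<Rightarrow> 'a" where b: "bij_betw \<phi> UNIV {u * a * u | a. True}"
    and m: "\<forall>c d. \<phi> (c * d) = smult c (\<phi> d)" and one: "\<phi> 1 = u"
    using corner unfolding corner_iso_field_def by blast
  have "z \<in> \<phi> ` UNIV" using b assms by (simp add: bij_betw_def)
  then obtain c where "z = \<phi> c" by blast
  also have "\<phi> c = smult c u" using m[rule_format, of c 1] one by simp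
  also have "smult c u = smult c 1 * u" using sm by (metis mult_1_left)
  finally show ?thesis by blast
qed

abbreviation "G v \<equiv> (delta u (Inl (cosk (delta u v)) :: 'a cterm) :: 'a \<times> 'a cterm \<Rightarrow> int)"

lemma u_mA: "u \<in> mA w" using u_eA wu by simp
lemma mAw: "mA w = eA" using wu by simp

lemma G_in: "v \<in> eA \<Longrightarrow> G v \<in> FT (-1)"
  by (rule free_ab_delta[OF u_mA c0_in])

lemma Rk_rel2: "x \<in> Ae \<Longrightarrow> y \<in> eA \<Longrightarrow> y' \<in> eA \<Longrightarrow> delta x (y + y') - delta x y - delta x y' \<in> zspan Rk"
  by (rule zspan_base) (unfold Rk_def tens_rels_def, blast)

lemma Rk_rel3: "x \<in> Ae \<Longrightarrow> y \<in> eA \<Longrightarrow> delta (x * smult c 1) y - delta x (smult c 1 * y) \<in> zspan Rk"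
  by (rule zspan_base) (unfold Rk_def tens_rels_def, blast)

lemma G_add: assumes "a \<in> eA" "b \<in> eA" shows "G (a + b) - G a - G b \<in> Z (-1)"
proof -
  have "delta u (a + b) - (delta u a + delta u b) \<in> zspan Rk"
    using Rk_rel2[OF u_Ae assms] by (simp add: algebra_simps)
  then have "cosk (delta u (a + b)) = cosk (delta u a + delta u b)" by (rule coset_eqI)
  then have e: "Inl (cosk (delta u (a + b))) = add (C (-1)) (Inl (cosk (delta u a))) (Inl (cosk (delta u b)))"
    by (simp add: m1_add)
  show ?thesis unfolding e by (rule RA_rel2[OF u_mA c0_in[OF assms(1)] c0_in[OF assms(2)]])
qed

lemma G_zero: "G 0 \<in> Z (-1)"
proof -
  have "delta u (0 + 0) - delta u 0 - delta u 0 \<in> zspan Rk" by (rule Rk_rel2[OF u_Ae]) (rule mA_zero)+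
  then have "- delta u (0::'a) \<in> zspan Rk" by simp
  from zspan_uminus[OF this] have "delta u (0::'a) \<in> zspan Rk" by simp
  then have "cosk (delta u 0) = zspan Rk" by (rule coset_memZ)
  then have "Inl (cosk (delta u 0)) = zer (C (-1))" by (simp add: C_m1)
  then show ?thesis using RA_zer[OF good_C u_mA] by simp
qed

lemma gen2: assumes p: "p \<in> eA" and x: "x \<in> Ae" and y: "y \<in> eA"
  shows "delta p (Inl (cosk (delta x y))) - G (p * x * y) \<in> Z (-1)"
proof -
  have g1: "delta p (Inl (cosk (delta x y))) - delta (p * x) (Inl (cosk (delta u y))) \<in> Z (-1)"
    using gen1[OF _ x y] p unfolding mAw by simp
  have "p * x \<in> {u * a * u | a. True}" using p x by (auto simp: mult.assoc) (metis mult.assoc)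
  then obtain c where c: "p * x = smult c 1 * u" using corner_smult by blast
  let ?s = "smult c 1"
  have su: "?s * u = u * ?s" by (rule central)
  let ?c0 = "Inl (cosk (delta u y)) :: 'a cterm"
  have r3: "delta (u * ?s) ?c0 - delta u (lact (C (-1)) ?s ?c0) \<in> Z (-1)"
    by (rule RA_rel3[OF u_mA c0_in[OF y]])
  have "lact (C (-1)) ?s ?c0 = Inl (cosk (delta (?s * u) y))"
    using m1_lact[OF free_ab_delta[OF u_Ae y], of ?s] by simp
  also have "cosk (delta (?s * u) y) = cosk (delta u (?s * y))"
    unfolding su by (rule coset_eqI[OF Rk_rel3[OF u_Ae y]])
  also have "?s * y = p * x * y" unfolding c using eA_u[OF y] by (simp add: mult.assoc)
  finally have l: "lact (C (-1)) ?s ?c0 = Inl (cosk (delta u (p * x * y)))" .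
  have eq: "delta p (Inl (cosk (delta x y))) - G (p * x * y)
      = (delta p (Inl (cosk (delta x y))) - delta (p * x) ?c0) + (delta (u * ?s) ?c0 - delta u (lact (C (-1)) ?s ?c0))"
    unfolding l c su by simp
  show ?thesis unfolding eq by (rule zspan_plus[OF g1 r3])
qed

end


lemma grp1: "(a::'x::ab_group_add) - d = (a - b - c) + (b - e) + (c - f) - (d - e - f)"
  by (simp add: algebra_simps)
lemma grp2: "(b::'x::ab_group_add) - e' = (a - e) - (a - b - c) - (c - f) + (e - e' - f)"
  by (simp add: algebra_simps)
lemma grp3: "((g::'x::ab_group_add) + r) - d = (g - e) + (r - f) - (d - e - f)"
  by (simp add: algebra_simps)
lemma grp4: "((g::'x::ab_group_add) - r) - d' = (g - e) - (r - f) + (e - d' - f)"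
  by (simp add: algebra_simps)

lemma mem1: assumes "a - b - c \<in> zspan R" "b - e \<in> zspan R" "c - f \<in> zspan R" "d - e - f \<in> zspan R"
  shows "a - d \<in> zspan R"
  unfolding grp1[of a d b c e f] by (rule zspan_minus[OF zspan_plus[OF zspan_plus[OF assms(1,2)] assms(3)] assms(4)])
lemma mem2: assumes "a - e \<in> zspan R" "a - b - c \<in> zspan R" "c - f \<in> zspan R" "e - e' - f \<in> zspan R"
  shows "b - e' \<in> zspan R"
  unfolding grp2[of b e' a e c f] by (rule zspan_plus[OF zspan_minus[OF zspan_minus[OF assms(1,2)] assms(3)] assms(4)])
lemma mem3: assumes "g - e \<in> zspan R" "r - f \<in> zspan R" "d - e - f \<in> zspan R"
  shows "(g + r) - d \<in> zspan R"
  unfolding grp3[of g r d e f] by (rule zspan_minus[OF zspan_plus[OF assms(1,2)] assms(3)])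
lemma mem4: assumes "g - e \<in> zspan R" "r - f \<in> zspan R" "e - d' - f \<in> zspan R"
  shows "(g - r) - d' \<in> zspan R"
  unfolding grp4[of g r d' e f] by (rule zspan_plus[OF zspan_minus[OF assms(1,2)] assms(3)])

context L1 begin

lemma eA_mult: "p \<in> eA \<Longrightarrow> p * b \<in> eA" by (rule mA_mult)

lemma gen3: assumes p: "p \<in> eA" and xi: "\<xi> \<in> zspan (deltas Ae eA)"
  shows "delta p (Inl (cosk \<xi>)) - G (p * msum \<xi>) \<in> Z (-1)"
  using xi
proof (rule zspan_induct[where P="\<lambda>\<xi>. delta p (Inl (cosk \<xi>)) - G (p * msum \<xi>) \<in> Z (-1)"])
  have pw: "p \<in> mA w" unfolding mAw by (rule p)
  show "delta p (Inl (cosk 0)) - G (p * msum 0) \<in> Z (-1)"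
    unfolding zer_m1 using zspan_minus[OF RA_zer[OF good_C pw] G_zero] by (simp add: msum_W)
next
  fix g r assume g: "g \<in> zspan (deltas Ae eA)" and IH: "delta p (Inl (cosk g)) - G (p * msum g) \<in> Z (-1)"
    and r: "r \<in> deltas Ae eA"
  obtain x y where r': "r = delta x y" "x \<in> Ae" "y \<in> eA" using r by (auto simp: deltas_def)
  have pw: "p \<in> mA w" unfolding mAw by (rule p)
  have gF: "g \<in> FK" using g by (rule zspan_deltas_free)
  have rF: "r \<in> FK" using r' by (simp add: free_ab_delta)
  have fg: "fs g" using gF by (rule FK_fs)
  have A: "p * msum g \<in> eA" using p by (rule eA_mult)
  have B: "p * x * y \<in> eA" using eA_mult[OF eA_mult[OF p]] .
  have M: "p * msum (g + r) = p * msum g + p * x * y" using fg r'(1)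
    by (simp add: msum_W W_add distrib_left mult.assoc)
  have rel: "delta p (add (C (-1)) (Inl (cosk g)) (Inl (cosk r))) - delta p (Inl (cosk g)) - delta p (Inl (cosk r)) \<in> Z (-1)"
    by (rule RA_rel2[OF pw m1_in[OF gF] m1_in[OF rF]])
  have gr: "delta p (Inl (cosk r)) - G (p * x * y) \<in> Z (-1)" using gen2[OF p r'(2,3)] r'(1) by simp
  have e: "Inl (cosk (g + r)) = add (C (-1)) (Inl (cosk g)) (Inl (cosk r))" by (simp add: m1_add)
  show "delta p (Inl (cosk (g + r))) - G (p * msum (g + r)) \<in> Z (-1)"
    unfolding e M by (rule mem1[OF rel IH gr G_add[OF A B]])
next
  fix g r assume g: "g \<in> zspan (deltas Ae eA)" and IH: "delta p (Inl (cosk g)) - G (p * msum g) \<in> Z (-1)"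
    and r: "r \<in> deltas Ae eA"
  obtain x y where r': "r = delta x y" "x \<in> Ae" "y \<in> eA" using r by (auto simp: deltas_def)
  have pw: "p \<in> mA w" unfolding mAw by (rule p)
  have gF: "g \<in> FK" using g by (rule zspan_deltas_free)
  have rF: "r \<in> FK" using r' by (simp add: free_ab_delta)
  have grF: "g - r \<in> FK" using gF rF by (rule free_ab_diff)
  have fg: "fs g" using gF by (rule FK_fs)
  have A: "p * msum g \<in> eA" using p by (rule eA_mult)
  have B: "p * x * y \<in> eA" using eA_mult[OF eA_mult[OF p]] .
  have AB: "p * msum g - p * x * y \<in> eA" using mA_add[OF A mA_uminus[OF B]] by simp
  have M: "p * msum (g - r) = p * msum g - p * x * y" using fg r'(1)
    by (simp add: msum_W W_diff right_diff_distrib mult.assoc)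
  have rel: "delta p (add (C (-1)) (Inl (cosk (g - r))) (Inl (cosk r))) - delta p (Inl (cosk (g - r))) - delta p (Inl (cosk r)) \<in> Z (-1)"
    by (rule RA_rel2[OF pw m1_in[OF grF] m1_in[OF rF]])
  have gr: "delta p (Inl (cosk r)) - G (p * x * y) \<in> Z (-1)" using gen2[OF p r'(2,3)] r'(1) by simp
  have e: "add (C (-1)) (Inl (cosk (g - r))) (Inl (cosk r)) = Inl (cosk g)" by (simp add: m1_add)
  have GA: "G (p * msum g - p * x * y + p * x * y) - G (p * msum g - p * x * y) - G (p * x * y) \<in> Z (-1)"
    by (rule G_add[OF AB B])
  show "delta p (Inl (cosk (g - r))) - G (p * msum (g - r)) \<in> Z (-1)"
    unfolding M
  proof -
    have rel': "delta p (Inl (cosk g)) - delta p (Inl (cosk (g - r))) - delta p (Inl (cosk r)) \<in> Z (-1)"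
      using rel unfolding e .
    have GA': "G (p * msum g) - G (p * msum g - p * x * y) - G (p * x * y) \<in> Z (-1)"
      using GA by simp
    show "delta p (Inl (cosk (g - r))) - G (p * msum g - p * x * y) \<in> Z (-1)" by (rule mem2[OF IH rel' gr GA'])
  qed
qed

lemma F1_delta: "F1 (delta p c) = p * mult_map (projl c)" by (simp add: F1_def)
lemma F1_add: "fs f \<Longrightarrow> fs g \<Longrightarrow> F1 (f + g) = F1 f + F1 g" by (simp add: F1_def W_add)
lemma F1_diff: "fs f \<Longrightarrow> fs g \<Longrightarrow> F1 (f - g) = F1 f - F1 g" by (simp add: F1_def W_diff)

lemma F1_in: assumes "f \<in> FT (-1)" shows "F1 f \<in> eA"
  unfolding F1_def
proof (rule W_in_mA)
  show "fs f" using assms by (rule FT_fs)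
  fix z assume "f z \<noteq> 0"
  then have "z \<in> mA w \<times> carr (C (-1))" using assms unfolding free_ab_iff by blast
  then have "fst z \<in> eA" unfolding mAw by (simp only: mem_Times_iff)
  then show "(\<lambda>(p, c). p * mult_map (projl c)) z \<in> eA" unfolding case_prod_beta by (rule mA_mult)
qed

lemma rep_m1: assumes "f \<in> FT (-1)" shows "f - G (F1 f) \<in> Z (-1)"
proof -
  have "f \<in> zspan (deltas (mA w) (carr (C (-1))))" using assms by (rule free_ab_zspan)
  then show ?thesis
  proof (rule zspan_induct[where P="\<lambda>f. f - G (F1 f) \<in> Z (-1)"])
    show "0 - G (F1 0) \<in> Z (-1)" using zspan_uminus[OF G_zero] by (simp add: F1_def)
  next
    fix g r assume g: "g \<in> zspan (deltas (mA w) (carr (C (-1))))" and IH: "g - G (F1 g) \<in> Z (-1)"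
      and r: "r \<in> deltas (mA w) (carr (C (-1)))"
    obtain p c where r': "r = delta p c" "p \<in> mA w" "c \<in> carr (C (-1))" using r by (auto simp: deltas_def)
    obtain \<xi> where x: "\<xi> \<in> FK" "c = Inl (cosk \<xi>)" using m1_elem[OF r'(3)] by blast
    have p: "p \<in> eA" using r'(2) unfolding mAw .
    have gF: "g \<in> FT (-1)" using g by (rule zspan_deltas_free)
    have F: "F1 g \<in> eA" using gF by (rule F1_in)
    have B: "p * msum \<xi> \<in> eA" using p by (rule eA_mult)
    have Fr: "F1 r = p * msum \<xi>" using r' x by (simp add: F1_delta mult_map_cos FK_fs)
    have M: "F1 (g + r) = F1 g + p * msum \<xi>" using Fr FT_fs[OF gF] r' by (simp add: F1_add)
    have rr: "r - G (p * msum \<xi>) \<in> Z (-1)" using gen3[OF p free_ab_zspan[OF x(1)]] r'(1) x(2) by simp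
    show "(g + r) - G (F1 (g + r)) \<in> Z (-1)"
      unfolding M by (rule mem3[OF IH rr G_add[OF F B]])
  next
    fix g r assume g: "g \<in> zspan (deltas (mA w) (carr (C (-1))))" and IH: "g - G (F1 g) \<in> Z (-1)"
      and r: "r \<in> deltas (mA w) (carr (C (-1)))"
    obtain p c where r': "r = delta p c" "p \<in> mA w" "c \<in> carr (C (-1))" using r by (auto simp: deltas_def)
    obtain \<xi> where x: "\<xi> \<in> FK" "c = Inl (cosk \<xi>)" using m1_elem[OF r'(3)] by blast
    have p: "p \<in> eA" using r'(2) unfolding mAw .
    have gF: "g \<in> FT (-1)" using g by (rule zspan_deltas_free)
    have F: "F1 g \<in> eA" using gF by (rule F1_in)
    have B: "p * msum \<xi> \<in> eA" using p by (rule eA_mult)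
    have FB: "F1 g - p * msum \<xi> \<in> eA" using mA_add[OF F mA_uminus[OF B]] by simp
    have Fr: "F1 r = p * msum \<xi>" using r' x by (simp add: F1_delta mult_map_cos FK_fs)
    have M: "F1 (g - r) = F1 g - p * msum \<xi>" using Fr FT_fs[OF gF] r' by (simp add: F1_diff)
    have rr: "r - G (p * msum \<xi>) \<in> Z (-1)" using gen3[OF p free_ab_zspan[OF x(1)]] r'(1) x(2) by simp
    have GA: "G (F1 g - p * msum \<xi> + p * msum \<xi>) - G (F1 g - p * msum \<xi>) - G (p * msum \<xi>) \<in> Z (-1)"
      by (rule G_add[OF FB B])
    show "(g - r) - G (F1 (g - r)) \<in> Z (-1)"
      unfolding M
    proof -
      have GA': "G (F1 g) - G (F1 g - p * msum \<xi>) - G (p * msum \<xi>) \<in> Z (-1)" using GA by simp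
      show "(g - r) - G (F1 g - p * msum \<xi>) \<in> Z (-1)" by (rule mem4[OF IH rr GA'])
    qed
  qed
qed

lemma ker_m1: assumes "f \<in> FT (-1)" "F1 f = 0" shows "f \<in> Z (-1)"
  using zspan_plus[OF rep_m1[OF assms(1)] G_zero] assms(2) by simp

lemma F1_G: assumes "v \<in> eA" shows "F1 (G v) = v"
proof -
  have "F1 (G v) = u * mult_map (cosk (delta u v))" by (simp add: F1_delta)
  also have "\<dots> = u * (u * v)" by (simp add: mult_map_cos msum_W)
  also have "\<dots> = v" using eA_u[OF assms] by simp
  finally show ?thesis .
qed

lemma F0_d: assumes "fs f" shows "F0 (pushf (phi (-1)) f) = F1 f"
proof -
  have eq: "(\<lambda>(p, c). p * projr c) \<circ> phi (-1) = (\<lambda>(p, c). p * mult_map (projl c))"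
    by (auto simp: fun_eq_iff Ci_d_m1)
  show ?thesis unfolding F0_def F1_def W_pushf[OF assms] eq ..
qed

lemma d_G: assumes "v \<in> eA" shows "dT (-1) (cz (-1) (G v)) = cz 0 (delta u (Inr v))"
proof -
  have "dT (-1) (cz (-1) (G v)) = cz (-1 + 1) (pushf (phi (-1)) (G v))" by (rule T_d[OF G_in[OF assms]])
  also have "pushf (phi (-1)) (G v) = delta u (Inr (u * v))"
    by (simp add: Ci_d_m1 mult_map_cos msum_W)
  finally show ?thesis using eA_u[OF assms] by simp
qed

end


lemma zero_submod_simps[simp]: "carr zero_submod = {0}" "add zero_submod = (+)" "ract zero_submod = (*)"
  by (simp_all add: zero_submod_def)

lemma stalk0_0: "stalk0 M 0 = M" by (simp add: stalk0_def)
lemma stalk0_n: "n \<noteq> 0 \<Longrightarrow> stalk0 M n = zero_submod" by (simp add: stalk0_def)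

lemma zero_cx_simps[simp]: "carr (zero_cx n) = {()}" "add (zero_cx n) x y = ()" "ract (zero_cx n) x a = ()"
  by (simp_all add: zero_cx_def)

context L begin

lemma T_elem: "X \<in> carr (T n) \<Longrightarrow> \<exists>f\<in>FT n. X = cz n f" by (auto simp: T_carr)

lemma setadd_Zr: "X \<in> carr (T n) \<Longrightarrow> setadd X (Z n) = X"
  using T_elem[of X n] setadd_cos_Z by auto

lemma setadd_ZZ: "setadd (Z n) (Z n) = Z n" by (rule setadd_Z)

lemma rhom_constT: "rhom M (T m) (\<lambda>_. Z m)"
  by (simp add: rhom_def T_Z T_add setadd_ZZ T_ractZ)

lemma F0_ract: assumes "fs f" shows "F0 (pushf (\<lambda>(p, c). (p, ract (C 0) c a)) f) = F0 f * a"
proof -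
  have eq: "(\<lambda>(p, c). p * projr c) \<circ> (\<lambda>(p, c). (p, ract (C 0) c a)) = (\<lambda>z. (\<lambda>(p, c). p * projr c) z * a)"
    by (auto simp: fun_eq_iff C_0 mult.assoc)
  show ?thesis unfolding F0_def W_pushf[OF assms] eq by (rule W_mult_right)
qed

lemma Fbar_add: "X \<in> carr (T 0) \<Longrightarrow> Y \<in> carr (T 0) \<Longrightarrow> Fbar (setadd X Y) = Fbar X + Fbar Y"
proof -
  assume X: "X \<in> carr (T 0)" and Y: "Y \<in> carr (T 0)"
  obtain f where f: "f \<in> FT 0" "X = cz 0 f" using T_elem[OF X] by blast
  obtain g where g: "g \<in> FT 0" "Y = cz 0 g" using T_elem[OF Y] by blast
  show ?thesis using f g
    by (simp add: setadd_coset Fbar_cz FT_fs fs_add F0_add)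
qed

lemma Fbar_ract: "X \<in> carr (T 0) \<Longrightarrow> Fbar (ract (T 0) X a) = Fbar X * a"
proof -
  assume X: "X \<in> carr (T 0)"
  obtain f where f: "f \<in> FT 0" "X = cz 0 f" using T_elem[OF X] by blast
  show ?thesis using f by (simp add: T_ract FT_fs Fbar_cz fs_pushf F0_ract)
qed

lemma Fbar_in: "X \<in> carr (T 0) \<Longrightarrow> Fbar X \<in> mA w"
proof -
  assume X: "X \<in> carr (T 0)"
  obtain f where f: "f \<in> FT 0" "X = cz 0 f" using T_elem[OF X] by blast
  show ?thesis using F0_in[OF f(1)] f by (simp add: Fbar_cz FT_fs)
qed

lemma D_in: "p \<in> mA w \<Longrightarrow> D p \<in> FT 0" by (rule free_ab_delta) (simp_all add: Inr_C0)

lemma D_Fbar: "X \<in> carr (T 0) \<Longrightarrow> cz 0 (D (Fbar X)) = X"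
proof -
  assume X: "X \<in> carr (T 0)"
  obtain f where f: "f \<in> FT 0" "X = cz 0 f" using T_elem[OF X] by blast
  have "D (F0 f) - f \<in> Z 0" using zspan_uminus[OF rep0[OF f(1)]] by simp
  then show ?thesis using f by (simp add: Fbar_cz FT_fs coset_eqI)
qed

lemma htpyA: assumes tri: "\<forall>a. w * a * u = 0"
  shows "htpy_equiv T dT (stalk0 P) stalk0_d"
proof -
  define f :: "int \<Rightarrow> ('a \<times> 'a cterm \<Rightarrow> int) set \<Rightarrow> 'a" where "f = (\<lambda>n X. if n = 0 then Fbar X else (0::'a))"
  define g :: "int \<Rightarrow> 'a \<Rightarrow> ('a \<times> 'a cterm \<Rightarrow> int) set" where "g = (\<lambda>n p. if n = 0 then cz 0 (D p) else Z n)"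
  have carrT: "carr (T n) = {Z n}" if "n \<noteq> 0" for n
    using lt_carr[OF tri] triv_carr[of n] that by (cases "n = -1") auto
  have rf: "rhom (T n) (stalk0 P n) (f n)" for n
  proof (cases "n = 0")
    case True
    have "\<forall>x\<in>carr (T 0). Fbar x \<in> mA w" using Fbar_in by blast
    then show ?thesis using True
      by (simp add: rhom_def f_def stalk0_0 T_add Fbar_add Fbar_ract)
  next
    case False then show ?thesis by (simp add: rhom_def f_def stalk0_n)
  qed
  have rg: "rhom (stalk0 P n) (T n) (g n)" for n
  proof (cases "n = 0")
    case True
    have "rhom P (T 0) (\<lambda>p. cz 0 (D p))"
      unfolding rhom_def
    proof (intro conjI ballI allI)
      fix p assume "p \<in> carr P" then show "cz 0 (D p) \<in> carr (T 0)" by (intro T_cos_in D_in) simp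
    next
      fix p q assume p: "p \<in> carr P" and q: "q \<in> carr P"
      have "D (p + q) - (D p + D q) \<in> Z 0" using D_add[of p q] p q by (simp add: diff_diff_eq)
      then show "cz 0 (D (add P p q)) = add (T 0) (cz 0 (D p)) (cz 0 (D q))"
        by (simp add: T_add setadd_coset coset_eqI)
    next
      fix p a assume p: "p \<in> carr P"
      have "ract (T 0) (cz 0 (D p)) a = cz 0 (delta p (Inr a))" by (simp add: T_ract C_0)
      moreover have "D (p * a) - delta p (Inr a) \<in> Z 0" using zspan_uminus[OF D_move[of p a]] p by simp
      ultimately show "cz 0 (D (ract P p a)) = ract (T 0) (cz 0 (D p)) a" by (simp add: coset_eqI)
    qed
    then show ?thesis using True by (simp add: g_def stalk0_0)
  next
    case False then show ?thesis by (simp add: rhom_def g_def stalk0_n T_Z T_add setadd_ZZ T_ractZ)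
  qed
  have cf: "chain_map T dT (stalk0 P) stalk0_d f"
    unfolding chain_map_def
  proof (intro conjI allI ballI rf)
    fix n x assume x: "x \<in> carr (T n)"
    show "f (n + 1) (dT n x) = stalk0_d n (f n x)"
    proof (cases "n = -1")
      case True
      then have "x = Z (-1)" using x carrT[of "-1"] by simp
      have FZ: "Fbar (Z 0) = 0" using Fbar_cz[OF fs_zero] by (simp add: coset_zero)
      show ?thesis using True \<open>x = Z (-1)\<close> FZ by (simp add: f_def stalk0_d_def T_dZ)
    next
      case False then show ?thesis by (simp add: f_def stalk0_d_def)
    qed
  qed
  have cg: "chain_map (stalk0 P) stalk0_d T dT g"
    unfolding chain_map_def
  proof (intro conjI allI ballI rg)
    fix n y assume y: "y \<in> carr (stalk0 P n)"
    show "g (n + 1) (stalk0_d n y) = dT n (g n y)"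
    proof (cases "n = -1")
      case True
      then show ?thesis using coset_memZ[OF D_zero] by (simp add: g_def stalk0_d_def T_dZ)
    next
      case n1: False
      show ?thesis
      proof (cases "n = 0")
        case True
        have yw: "y \<in> mA w" using y True by (simp add: stalk0_0)
        have "dT 0 (cz 0 (D y)) = cz 1 (pushf (phi 0) (D y))" using T_d(1)[OF D_in[OF yw]] by simp
        also have "\<dots> = Z 1" using T_d(2)[OF D_in[OF yw]] by (simp add: coset_memZ triv_FT)
        finally show ?thesis using True by (simp add: g_def stalk0_d_def)
      next
        case False
        then show ?thesis using n1 by (simp add: g_def stalk0_d_def T_dZ)
      qed
    qed
  qed
  have hT: "homotopic T dT T dT (\<lambda>n. g n \<circ> f n) (\<lambda>n x. x)"
    unfolding homotopic_def
  proof (intro exI[of _ "\<lambda>n x. Z (n - 1)"] conjI allI ballI rhom_constT)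
    fix n x assume x: "x \<in> carr (T n)"
    have r: "add (T n) x (add (T n) (dT (n - 1) (Z (n - 1))) (Z (n + 1 - 1))) = x"
      using T_dZ[of "n - 1"] by (simp add: T_add setadd_ZZ setadd_Zr[OF x])
    show "(g n \<circ> f n) x = add (T n) x (add (T n) (dT (n - 1) (Z (n - 1))) (Z (n + 1 - 1)))"
      unfolding r
    proof (cases "n = 0")
      case True then show "(g n \<circ> f n) x = x" using x by (simp add: f_def g_def D_Fbar)
    next
      case False then show "(g n \<circ> f n) x = x" using x carrT[OF False] by (simp add: f_def g_def)
    qed
  qed
  have rz: "rhom (stalk0 P n) (stalk0 P m) (\<lambda>_. 0)" for n m
    by (cases "m = 0") (use mA_zero[of w] in \<open>simp_all add: rhom_def stalk0_0 stalk0_n\<close>)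
  have hS: "homotopic (stalk0 P) stalk0_d (stalk0 P) stalk0_d (\<lambda>n. f n \<circ> g n) (\<lambda>n x. x)"
    unfolding homotopic_def
  proof (intro exI[of _ "\<lambda>n x. 0"] conjI allI ballI rz)
    fix n x assume x: "x \<in> carr (stalk0 P n)"
    show "(f n \<circ> g n) x = add (stalk0 P n) x (add (stalk0 P n) (stalk0_d (n - 1) 0) 0)"
    proof (cases "n = 0")
      case True
      have xw: "x \<in> mA w" using x True by (simp add: stalk0_0)
      show ?thesis using True by (simp add: f_def g_def stalk0_0 stalk0_d_def Fbar_cz)
    next
      case False then show ?thesis using x by (simp add: f_def g_def stalk0_n stalk0_d_def)
    qed
  qed
  show ?thesis unfolding htpy_equiv_def using cf cg hT hS by blast
qed

end


context L1 begin

definition h0 :: "('a \<times> 'a cterm \<Rightarrow> int) set \<Rightarrow> ('a \<times> 'a cterm \<Rightarrow> int) set" where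
  "h0 X = cz (-1) (G (- Fbar X))"

lemma Fbar_in': assumes X: "X \<in> carr (T 0)" shows "- Fbar X \<in> eA"
proof -
  have "- Fbar X \<in> mA w" by (rule mA_uminus[OF Fbar_in[OF X]])
  then show ?thesis unfolding mAw .
qed

lemma G_ract: assumes "v \<in> eA" shows "ract (T (-1)) (cz (-1) (G v)) a = cz (-1) (G (v * a))"
proof -
  have "ract (T (-1)) (cz (-1) (G v)) a = cz (-1) (pushf (\<lambda>(p, c). (p, ract (C (-1)) c a)) (G v))"
    by (rule T_ract) simp
  also have "pushf (\<lambda>(p, c). (p, ract (C (-1)) c a)) (G v) = G (v * a)"
    using m1_ract[OF free_ab_delta[OF u_Ae assms], of a] by simp
  finally show ?thesis .
qed

lemma rhom_h0: "rhom (T 0) (T (-1)) h0"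
  unfolding rhom_def
proof (intro conjI ballI allI)
  fix x assume x: "x \<in> carr (T 0)"
  show "h0 x \<in> carr (T (-1))" unfolding h0_def by (rule T_cos_in, rule G_in, rule Fbar_in'[OF x])
next
  fix x y assume x: "x \<in> carr (T 0)" and y: "y \<in> carr (T 0)"
  have a: "- Fbar x \<in> eA" "- Fbar y \<in> eA" using Fbar_in' x y by auto
  have "G (- Fbar x + - Fbar y) - (G (- Fbar x) + G (- Fbar y)) \<in> Z (-1)"
    using G_add[OF a] by (simp add: diff_diff_eq)
  then have "G (- (Fbar x + Fbar y)) - (G (- Fbar x) + G (- Fbar y)) \<in> Z (-1)" by (simp add: add.commute)
  then show "h0 (add (T 0) x y) = add (T (-1)) (h0 x) (h0 y)"
    unfolding h0_def T_add Fbar_add[OF x y] setadd_coset by (rule coset_eqI)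
next
  fix x a assume x: "x \<in> carr (T 0)"
  show "h0 (ract (T 0) x a) = ract (T (-1)) (h0 x) a"
    unfolding h0_def Fbar_ract[OF x] G_ract[OF Fbar_in'[OF x]] by simp
qed

lemma htpyB: "htpy_equiv T dT (zero_cx :: int \<Rightarrow> (unit, 'a) rmod) zero_cx_d"
proof -
  define f :: "int \<Rightarrow> ('a \<times> 'a cterm \<Rightarrow> int) set \<Rightarrow> unit" where "f = (\<lambda>n x. ())"
  define g :: "int \<Rightarrow> unit \<Rightarrow> ('a \<times> 'a cterm \<Rightarrow> int) set" where "g = (\<lambda>n x. Z n)"
  have cf: "chain_map T dT (zero_cx :: int \<Rightarrow> (unit, 'a) rmod) zero_cx_d f"
    by (simp add: chain_map_def rhom_def f_def zero_cx_d_def)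
  have cg: "chain_map (zero_cx :: int \<Rightarrow> (unit, 'a) rmod) zero_cx_d T dT g"
    unfolding chain_map_def g_def by (simp add: rhom_constT T_dZ)
  have hZ: "homotopic (zero_cx :: int \<Rightarrow> (unit, 'a) rmod) zero_cx_d zero_cx zero_cx_d (\<lambda>n. f n \<circ> g n) (\<lambda>n x. x)"
    unfolding homotopic_def by (rule exI[of _ "\<lambda>n x. ()"]) (simp add: rhom_def)
  define h :: "int \<Rightarrow> ('a \<times> 'a cterm \<Rightarrow> int) set \<Rightarrow> ('a \<times> 'a cterm \<Rightarrow> int) set"
    where "h = (\<lambda>n. if n = 0 then h0 else (\<lambda>_. Z (n - 1)))"
  have rh: "rhom (T n) (T (n - 1)) (h n)" for n
    using rhom_h0 by (cases "n = 0") (simp_all add: h_def rhom_constT)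
  have hT: "homotopic T dT T dT (\<lambda>n. g n \<circ> f n) (\<lambda>n x. x)"
    unfolding homotopic_def
  proof (intro exI[of _ h] conjI allI ballI rh)
    fix n x assume x: "x \<in> carr (T n)"
    show "(g n \<circ> f n) x = add (T n) x (add (T n) (dT (n - 1) (h n x)) (h (n + 1) (dT n x)))"
    proof (cases "n = 0")
      case True
      obtain f0 where f0: "f0 \<in> FT 0" "x = cz 0 f0" using T_elem[OF x[unfolded True]] by blast
      have Fx: "Fbar x = F0 f0" using f0 by (simp add: Fbar_cz FT_fs)
      have F: "F0 f0 \<in> eA" using F0_in[OF f0(1)] unfolding mAw .
      have mF: "- F0 f0 \<in> eA" using mA_uminus[OF F] .
      have d: "dT (-1) (h0 x) = cz 0 (delta u (Inr (- F0 f0)))"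
        unfolding h0_def Fx by (rule d_G[OF mF])
      have k: "f0 + delta u (Inr (- F0 f0)) \<in> Z 0"
      proof (rule ker0)
        show "f0 + delta u (Inr (- F0 f0)) \<in> FT 0"
          by (rule free_ab_add[OF f0(1) free_ab_delta[OF u_mA Inr_C0]])
        show "F0 (f0 + delta u (Inr (- F0 f0))) = 0"
          using f0 eA_u[OF F] by (simp add: F0_add FT_fs)
      qed
      have e: "setadd x (setadd (dT (-1) (h0 x)) (Z 0)) = Z 0"
        unfolding d setadd_cos_Z unfolding f0(2) setadd_coset by (rule coset_memZ[OF k])
      show ?thesis using True e by (simp add: g_def h_def T_add)
    next
      case n0: False
      show ?thesis
      proof (cases "n = -1")
        case True
        obtain f1 where f1: "f1 \<in> FT (-1)" "x = cz (-1) f1" using T_elem[OF x[unfolded True]] by blast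
        have F: "F1 f1 \<in> eA" by (rule F1_in[OF f1(1)])
        have mF: "- F1 f1 \<in> eA" using mA_uminus[OF F] .
        have dx: "dT (-1) x = cz 0 (pushf (phi (-1)) f1)" using T_d(1)[OF f1(1)] f1(2) by simp
        have pf: "pushf (phi (-1)) f1 \<in> FT 0" using T_d(2)[OF f1(1)] by simp
        have hd: "h 0 (dT (-1) x) = cz (-1) (G (- F1 f1))"
          unfolding dx h_def h0_def using pf by (simp add: Fbar_cz FT_fs F0_d FT_fs[OF f1(1)])
        have k: "f1 + G (- F1 f1) \<in> Z (-1)"
        proof (rule ker_m1)
          show "f1 + G (- F1 f1) \<in> FT (-1)" by (rule free_ab_add[OF f1(1) G_in[OF mF]])
          show "F1 (f1 + G (- F1 f1)) = 0"
            using F1_G[OF mF] by (simp add: F1_add FT_fs[OF f1(1)] FT_fs[OF G_in[OF mF]])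
        qed
        have z: "setadd (Z (-1)) (cz (-1) (G (- F1 f1))) = cz (-1) (G (- F1 f1))"
          using setadd_coset[of "RA w (C (-1))" 0 "G (- F1 f1)"] by (simp add: coset_zero)
        have hd': "h0 (dT (-1) x) = cz (-1) (G (- F1 f1))" using hd by (simp add: h_def)
        have e: "setadd x (setadd (Z (-1)) (h0 (dT (-1) x))) = Z (-1)"
          unfolding hd' z unfolding f1(2) setadd_coset by (rule coset_memZ[OF k])
        have dz: "dT (-1 - 1) (Z (-1 - 1)) = Z (-1)" using T_dZ[of "-1 - 1"] by simp
        show ?thesis using True e dz by (simp add: g_def h_def T_add)
      next
        case False
        have xz: "x = Z n" using x triv_carr[OF False n0] by simp
        have n1: "n + 1 \<noteq> 0" using False by simp
        show ?thesis using n0 n1 xz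
          by (simp add: g_def h_def T_add T_dZ setadd_ZZ)
      qed
    qed
  qed
  show ?thesis unfolding htpy_equiv_def using cf cg hT hZ by blast
qed

end

lemma caseA:
  fixes smult :: "'k::field \<Rightarrow> 'a::ring_1 \<Rightarrow> 'a"
  assumes "u * u = u" "\<forall>c a b. smult c (a * b) = smult c a * b \<and> smult c (a * b) = a * smult c b"
    and tri: "\<forall>a. w * a * u = 0"
  shows "htpy_equiv (RiA smult u (proj_mod w)) (RiA_d smult u (proj_mod w)) (stalk0 (proj_mod w)) stalk0_d"
proof -
  interpret L smult u w by unfold_locales (fact assms(1), fact assms(2))
  show ?thesis by (rule htpyA[OF tri])
qed

lemma caseB:
  fixes smult :: "'k::field \<Rightarrow> 'a::ring_1 \<Rightarrow> 'a"
  assumes "u * u = u" "\<forall>c a b. smult c (a * b) = smult c a * b \<and> smult c (a * b) = a * smult c b"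
    and "corner_iso_field smult u"
  shows "htpy_equiv (RiA smult u (proj_mod u)) (RiA_d smult u (proj_mod u)) (zero_cx :: int \<Rightarrow> (unit, 'a) rmod) zero_cx_d"
proof -
  interpret L1 smult u u by unfold_locales (fact assms(1), fact assms(2), rule refl, fact assms(3))
  show ?thesis by (rule htpyB)
qed


theorem lemma2p6:
  fixes smult :: "'k::field \<Rightarrow> 'a::ring_1 \<Rightarrow> 'a"
    and e :: "nat \<Rightarrow> 'a" and n i j :: nat
  assumes "fd_algebra smult"
    and "complete_prim_orth_idems e n"
    and "triangular smult e n"
    and "1 \<le> i" and "i \<le> j" and "j \<le> n"
  shows "(j = i \<longrightarrow>
            htpy_equiv (RiA smult (e i) (proj_mod (e j))) (RiA_d smult (e i) (proj_mod (e j)))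
                       (zero_cx :: int \<Rightarrow> (unit, 'a) rmod) zero_cx_d)
       \<and> (i < j \<longrightarrow>
            htpy_equiv (RiA smult (e i) (proj_mod (e j))) (RiA_d smult (e i) (proj_mod (e j)))
                       (stalk0 (proj_mod (e j))) stalk0_d)"
proof -
  have i: "i \<in> {1..n}" and j: "j \<in> {1..n}" using assms(4-6) by auto
  have idem_i: "e i * e i = e i"
    using assms(2) i unfolding complete_prim_orth_idems_def primitive_idem_def idem_def by blast
  have sm: "\<forall>c a b. smult c (a * b) = smult c a * b \<and> smult c (a * b) = a * smult c b"
    using assms(1) unfolding fd_algebra_def by blast
  have corner: "corner_iso_field smult (e i)" using assms(3) i unfolding triangular_def by blast
  show ?thesis
  proof (intro conjI impI)
    assume "j = i"
    then show "htpy_equiv (RiA smult (e i) (proj_mod (e j))) (RiA_d smult (e i) (proj_mod (e j)))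
                       (zero_cx :: int \<Rightarrow> (unit, 'a) rmod) zero_cx_d"
      using caseB[OF idem_i sm corner] by simp
  next
    assume ij: "i < j"
    have tri: "\<forall>a. e j * a * e i = 0" using assms(3) i j ij unfolding triangular_def by blast
    show "htpy_equiv (RiA smult (e i) (proj_mod (e j))) (RiA_d smult (e i) (proj_mod (e j)))
                       (stalk0 (proj_mod (e j))) stalk0_d"
      by (rule caseA[OF idem_i sm tri])
  qed
qed


end
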